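(* Let $q$ be a prime power, $m\ge1$, $1\le k\le n$, $g_1,\dots,g_n\in\mathbb{F}_{q^m}$ linearly independent over $\mathbb{F}_q$, $\mathbf g=(g_1,\dots,g_n)$, $\mathbf r=(r_1,\dots,r_n)\in\mathbb{F}_{q^m}^n$. Then Algorithm 3 (described in the context) yields a minimal basis of the interpolation module $\mathfrak M(\mathbf r)$ with respect to the $(0,k-1)$-weighted term-over-position order, where the leading position of the first row is $1$ and the leading position of the second row is $2$.
   Context: Write $[i]:=q^i$. A $q$-linearized polynomial is $f(x)=\sum_{i=0}^{d}a_ix^{[i]}$, $a_i\in\mathbb{F}_{q^m}$; if $a_d\ne0$, $d=\mathrm{qdeg}(f)$ ($\mathrm{qdeg}(0)=-\infty$). $\mathcal{L}_q(x,q^m)$ is the ring of these under addition and composition $\circ$. $\Pi_{\mathbf g}(x)=\prod_{u\in\langle g_1,\dots,g_n\rangle}(x-u)$ ($\mathbb{F}_q$-span), of $q$-degree $n$ in $\mathcal{L}_q(x,q^m)$. $\Lambda_{\mathbf g,\mathbf r}(x)=\sum_{i=1}^n(-1)^{n-i}r_i\det(\mathfrak D_i(\mathbf g,x))/\det(M_n(g_1,\dots,g_n))$ ($M_n(v_1,\dots,v_s)$ the $n\times s$ matrix with $(j,l)$ entry $v_l^{[j-1]}$; $\mathfrak D_i(\mathbf g,x)$ is $M_n(g_1,\dots,g_n,x)$ without the $i$-th column), in $\mathcal{L}_q(x,q^m)$ with $\Lambda_{\mathbf g,\mathbf r}(g_i)=r_i$. $\mathcal{L}_q(x,q^m)^2$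 is a left module via $h\circ[f_1\ f_2]=[h\circ f_1\ \ h\circ f_2]$; $\mathfrak M(\mathbf r)$ is the set of all $\beta\circ[\Pi_{\mathbf g}\ \ 0]+\gamma\circ[-\Lambda_{\mathbf g,\mathbf r}\ \ x]$, $\beta,\gamma\in\mathcal{L}_q(x,q^m)$. Monomials are $x^{[i]}e_j$, $j\in\{1,2\}$. $(0,k-1)$-weighted term-over-position order: with $w_1=0,w_2=k-1$, $x^{[i_1]}e_{j_1}<x^{[i_2]}e_{j_2}$ iff $i_1+w_{j_1}<i_2+w_{j_2}$ or (equality and $j_1<j_2$). $\mathrm{lm}(f)$, $\mathrm{lt}(f)$, $\mathrm{lpos}(f)$: the largest monomial of nonzero $f$, that term with its coefficient, and its coordinate. A basis is a linearly independent generating set ($\sum a_i\circ f^{(i)}=0\Rightarrow a_i=0$). $f$ reduces modulo a set $F$ of nonzero elements in one step if $h=f-\sum_i(b_ix^{[a_i]})\circ f^{(i)}$ for some $f^{(i)}\in F$, $b_i\in\mathbb{F}_{q^m}$, $a_i\ge0$ with $\mathrm{lm}(f)=x^{[a_i]}\circ\mathrm{lm}(f^{(i)})$ and $\mathrm{lt}(f)=\sum_i(b_ix^{[a_i]})\circ\mathrm{lt}(f^{(i)})$; $f$ is minimal w.r.t. $F$ if it cannot be reduced modulo $F$; a basis $B$ is minimal if each $b\in B$ is minimal w.r.t. $B\setminus\{b\}$. Matrix composition of $2\times2$ matrices over $\mathcal{L}_q(x,q^m)$ is defined like matrix multiplication with products replaced by composition. Algorithm 3 (input $k,\mathbf g,\mathbf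 r$): $B_0=\begin{bmatrix}x&0\\0&x\end{bmatrix}$; writing $B_i=\begin{bmatrix}P_i&-K_i\\N_i&-D_i\end{bmatrix}$, for $i=1,\dots,n$: $\Gamma_i:=P_{i-1}(g_i)-K_{i-1}(r_i)$, $\Delta_i:=N_{i-1}(g_i)-D_{i-1}(r_i)$; if [$\mathrm{qdeg}(P_{i-1})\le\mathrm{qdeg}(D_{i-1})+k-1$ and $\Gamma_i\ne0$] or $\Delta_i=0$, then $B_i:=\begin{bmatrix}x^q-\Gamma_i^{q-1}x&0\\\Delta_ix&-\Gamma_ix\end{bmatrix}\circ B_{i-1}$; else $B_i:=\begin{bmatrix}\Delta_ix&-\Gamma_ix\\0&x^q-\Delta_i^{q-1}x\end{bmatrix}\circ B_{i-1}$. Return $B_n$ (its two rows). *)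

theory Defs
  imports "Jordan_Normal_Form.Determinant" "HOL-Computational_Algebra.Polynomial"
    "HOL-Library.Extended_Real"
begin

(* Linearized polynomials are
   ordinary polynomials in 'a poly all of whose monomials are of the form x^(q^i);
   composition is pcompose, evaluation is poly. *)

definition Fq :: "nat \<Rightarrow> 'a::field set" where
  "Fq q = {x. x ^ q = x}"

definition is_linearized :: "nat \<Rightarrow> 'a::field poly \<Rightarrow> bool" where
  "is_linearized q f \<longleftrightarrow> (\<forall>i. coeff f i \<noteq> 0 \<longrightarrow> (\<exists>j. i = q ^ j))"

definition qdegn :: "nat \<Rightarrow> 'a::field poly \<Rightarrow> nat" where
  "qdegn q f = Max {i. coeff f (q ^ i) \<noteq> 0}"

definition qdeg :: "nat \<Rightarrow> 'a::field poly \<Rightarrow> ereal" where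
  "qdeg q f = (if f = 0 then -\<infinity> else ereal (real (qdegn q f)))"

definition Fq_lin_indep :: "nat \<Rightarrow> 'a::field list \<Rightarrow> bool" where
  "Fq_lin_indep q g \<longleftrightarrow>
     (\<forall>c. (\<forall>i<length g. c i \<in> Fq q) \<longrightarrow> (\<Sum>i<length g. c i * g ! i) = 0
          \<longrightarrow> (\<forall>i<length g. c i = 0))"

definition Fq_span :: "nat \<Rightarrow> 'a::field list \<Rightarrow> 'a set" where
  "Fq_span q g = {(\<Sum>i<length g. c i * g ! i) | c. \<forall>i<length g. c i \<in> Fq q}"

definition Pi_g :: "nat \<Rightarrow> 'a::field list \<Rightarrow> 'a poly" where
  "Pi_g q g = (\<Prod>u\<in>Fq_span q g. [:- u, 1:])"

(* M_n(g_1,...,g_n): (j,l) entry g_l^[j-1]  (0-based here) *)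
definition Mn :: "nat \<Rightarrow> 'a::field list \<Rightarrow> 'a mat" where
  "Mn q g = mat (length g) (length g) (\<lambda>(j,l). (g ! l) ^ (q ^ j))"

(* \<frak>D_i(g,x): M_n(g_1,...,g_n,x) with the column of index i (0-based) removed,
   entries are polynomials *)
definition Dmat :: "nat \<Rightarrow> 'a::field list \<Rightarrow> nat \<Rightarrow> 'a poly mat" where
  "Dmat q g i =
     (let cols = map (\<lambda>c. [:c:]) g @ [[:0, 1:]];
          cols' = take i cols @ drop (Suc i) cols
      in mat (length g) (length g) (\<lambda>(j,l). (cols' ! l) ^ (q ^ j)))"

definition Lambda_gr :: "nat \<Rightarrow> 'a::field list \<Rightarrow> 'a list \<Rightarrow> 'a poly" where
  "Lambda_gr q g r =
     smult (inverse (det (Mn q g)))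
       (\<Sum>i<length g. smult ((-1) ^ (length g - 1 - i) * r ! i) (det (Dmat q g i)))"

(* elements of L_q(x,q^m)^2 as pairs; left action by composition *)
type_synonym 'a vec2 = "'a poly \<times> 'a poly"

definition vcomp :: "'a::field poly \<Rightarrow> 'a vec2 \<Rightarrow> 'a vec2" where
  "vcomp h f = (pcompose h (fst f), pcompose h (snd f))"

definition vadd :: "'a::field vec2 \<Rightarrow> 'a vec2 \<Rightarrow> 'a vec2" where
  "vadd f h = (fst f + fst h, snd f + snd h)"

definition interp_module :: "nat \<Rightarrow> 'a::field list \<Rightarrow> 'a list \<Rightarrow> 'a vec2 set" where
  "interp_module q g r =
     {vadd (vcomp \<beta> (Pi_g q g, 0)) (vcomp \<gamma> (- Lambda_gr q g r, [:0, 1:])) | \<beta> \<gamma>.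
        is_linearized q \<beta> \<and> is_linearized q \<gamma>}"

definition wdeg :: "nat \<Rightarrow> nat \<Rightarrow> 'a::field vec2 \<Rightarrow> nat \<Rightarrow> ereal" where
  "wdeg q k f j = (if j = 1 then qdeg q (fst f) else qdeg q (snd f) + ereal (real k - 1))"

definition lpos :: "nat \<Rightarrow> nat \<Rightarrow> 'a::field vec2 \<Rightarrow> nat" where
  "lpos q k f = (if wdeg q k f 1 \<le> wdeg q k f 2 then 2 else 1)"

definition comp_at :: "'a::field vec2 \<Rightarrow> nat \<Rightarrow> 'a poly" where
  "comp_at f j = (if j = 1 then fst f else snd f)"

definition unit_vec :: "nat \<Rightarrow> 'a::field poly \<Rightarrow> 'a vec2" where
  "unit_vec j p = (if j = 1 then (p, 0) else (0, p))"

definition lm :: "nat \<Rightarrow> nat \<Rightarrow> 'a::field vec2 \<Rightarrow> 'a vec2" where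
  "lm q k f = (let j = lpos q k f in unit_vec j (monom 1 (q ^ qdegn q (comp_at f j))))"

definition lt :: "nat \<Rightarrow> nat \<Rightarrow> 'a::field vec2 \<Rightarrow> 'a vec2" where
  "lt q k f = (let j = lpos q k f; d = qdegn q (comp_at f j)
               in unit_vec j (monom (coeff (comp_at f j) (q ^ d)) (q ^ d)))"

definition vsum :: "'a::field vec2 list \<Rightarrow> 'a vec2" where
  "vsum xs = foldr vadd xs (0, 0)"

definition reducible :: "nat \<Rightarrow> nat \<Rightarrow> 'a::field vec2 \<Rightarrow> 'a vec2 set \<Rightarrow> bool" where
  "reducible q k f F \<longleftrightarrow>
     (\<exists>ts :: ('a vec2 \<times> 'a \<times> nat) list.
        (\<forall>(h, b, a) \<in> set ts. h \<in> F \<and> lm q k f = vcomp (monom 1 (q ^ a)) (lm q k h))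
      \<and> lt q k f = vsum (map (\<lambda>(h, b, a). vcomp (monom b (q ^ a)) (lt q k h)) ts))"

definition minimal_wrt :: "nat \<Rightarrow> nat \<Rightarrow> 'a::field vec2 \<Rightarrow> 'a vec2 set \<Rightarrow> bool" where
  "minimal_wrt q k f F \<longleftrightarrow> \<not> reducible q k f F"

definition is_basis :: "nat \<Rightarrow> 'a::field vec2 set \<Rightarrow> 'a vec2 set \<Rightarrow> bool" where
  "is_basis q M B \<longleftrightarrow> finite B \<and>
     M = {vsum (map (\<lambda>b. vcomp (a b) b) bs) | a bs. set bs = B \<and> distinct bs
              \<and> (\<forall>b\<in>B. is_linearized q (a b))} \<and>
     (\<forall>a bs. set bs = B \<and> distinct bs \<and> (\<forall>b\<in>B. is_linearized q (a b))
        \<longrightarrow> vsum (map (\<lambda>b. vcomp (a b) b) bs) = (0, 0) \<longrightarrow> (\<forall>b\<in>B. a b = 0))"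

definition minimal_basis :: "nat \<Rightarrow> nat \<Rightarrow> 'a::field vec2 set \<Rightarrow> 'a vec2 set \<Rightarrow> bool" where
  "minimal_basis q k M B \<longleftrightarrow> is_basis q M B \<and> (0, 0) \<notin> B \<and>
     (\<forall>b\<in>B. minimal_wrt q k b (B - {b}))"

(* 2x2 matrices over L_q as quadruples (b11, b12, b21, b22); matrix composition *)
type_synonym 'a mat2 = "'a poly \<times> 'a poly \<times> 'a poly \<times> 'a poly"

definition mcomp :: "'a::field mat2 \<Rightarrow> 'a mat2 \<Rightarrow> 'a mat2" where
  "mcomp M B = (case M of (m11, m12, m21, m22) \<Rightarrow> case B of (b11, b12, b21, b22) \<Rightarrow>
     (pcompose m11 b11 + pcompose m12 b21, pcompose m11 b12 + pcompose m12 b22,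
      pcompose m21 b11 + pcompose m22 b21, pcompose m21 b12 + pcompose m22 b22))"

(* one iteration of Algorithm 3; B = [P, -K; N, -D] *)
definition alg3_step :: "nat \<Rightarrow> nat \<Rightarrow> 'a::field \<times> 'a \<Rightarrow> 'a mat2 \<Rightarrow> 'a mat2" where
  "alg3_step q k gr B = (case gr of (gi, ri) \<Rightarrow> case B of (b11, b12, b21, b22) \<Rightarrow>
     (let P = b11; K = - b12; N = b21; D = - b22;
          \<Gamma> = poly P gi - poly K ri; \<Delta> = poly N gi - poly D ri
      in if (qdeg q P \<le> qdeg q D + ereal (real k - 1) \<and> \<Gamma> \<noteq> 0) \<or> \<Delta> = 0
         then mcomp (monom 1 q - monom (\<Gamma> ^ (q - 1)) 1, 0, monom \<Delta> 1, - monom \<Gamma> 1) B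
         else mcomp (monom \<Delta> 1, - monom \<Gamma> 1, 0, monom 1 q - monom (\<Delta> ^ (q - 1)) 1) B))"

fun alg3_loop :: "nat \<Rightarrow> nat \<Rightarrow> ('a::field \<times> 'a) list \<Rightarrow> 'a mat2 \<Rightarrow> 'a mat2" where
  "alg3_loop q k [] B = B"
| "alg3_loop q k (gr # grs) B = alg3_loop q k grs (alg3_step q k gr B)"

definition alg3 :: "nat \<Rightarrow> nat \<Rightarrow> 'a::field list \<Rightarrow> 'a list \<Rightarrow> 'a mat2" where
  "alg3 q k g r = alg3_loop q k (zip g r) ([:0, 1:], 0, 0, [:0, 1:])"

definition row1 :: "'a::field mat2 \<Rightarrow> 'a vec2" where
  "row1 B = (case B of (b11, b12, b21, b22) \<Rightarrow> (b11, b12))"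

definition row2 :: "'a::field mat2 \<Rightarrow> 'a vec2" where
  "row2 B = (case B of (b11, b12, b21, b22) \<Rightarrow> (b21, b22))"

end

theory Submission imports Defs "HOL-Number_Theory.Residues" begin

hide_const (open) UnivPoly.coeff UnivPoly.monom UnivPoly.up_ring.monom


locale ffq =
  fixes q :: nat and e m :: nat and ty :: "'a::{field,finite} itself"
  assumes e_pos: "e > 0" and q_def: "q = CHAR('a)^e" and m_pos: "m \<ge> 1"
    and card_UNIV: "card (UNIV::'a set) = q^m"
begin

lemma CHAR_prime: "prime CHAR('a)"
  by (rule prime_CHAR_semidom) (simp add: finite_imp_CHAR_pos)

lemma CHAR_eq: "p = CHAR('a)" if "prime p" "q = p ^ e'" "e' > 0"
proof -
  have "CHAR('a) dvd p ^ (e' * m)" using CHAR_dvd_CARD[where 'a='a] card_UNIV that by (simp add: power_mult)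
  hence "CHAR('a) dvd p" using CHAR_prime prime_dvd_power by blast
  thus ?thesis using that CHAR_prime by (metis primes_dvd_imp_eq)
qed

lemma q_ge2: "q \<ge> 2"
proof -
  have "CHAR('a) \<ge> 2" using CHAR_prime prime_ge_2_nat by blast
  hence "CHAR('a)^1 \<le> CHAR('a)^e" using e_pos by (intro power_increasing) auto
  thus ?thesis unfolding q_def using \<open>CHAR('a) \<ge> 2\<close> by simp
qed

lemma q_pos: "q > 0" using q_ge2 by simp

lemma frob_add: "(x + y :: 'b::comm_semiring_1) ^ (q^j) = x^(q^j) + y^(q^j)"
  if "CHAR('b) = CHAR('a)"
proof -
  have "q^j = CHAR('b)^(e*j)" by (simp add: q_def that power_mult)
  thus ?thesis by (intro freshmans_dream') (auto simp: that CHAR_prime)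
qed

lemma frob_sum: "(sum f A :: 'b::comm_semiring_1) ^ (q^j) = sum (\<lambda>i. f i ^ (q^j)) A"
  if "CHAR('b) = CHAR('a)"
proof -
  have "q^j = CHAR('b)^(e*j)" by (simp add: q_def that power_mult)
  thus ?thesis by (intro freshmans_dream_sum') (auto simp: that CHAR_prime)
qed

lemma frob_add_a: "(x + y :: 'a) ^ (q^j) = x^(q^j) + y^(q^j)"
  by (rule frob_add) simp
lemma frob_add_p: "(x + y :: 'a poly) ^ (q^j) = x^(q^j) + y^(q^j)"
  by (rule frob_add) simp
lemma frob_sum_p: "(sum f A :: 'a poly) ^ (q^j) = sum (\<lambda>i. f i ^ (q^j)) A"
  by (rule frob_sum) simp

lemma frob_minus_a: "(- x :: 'a) ^ (q^j) = - (x^(q^j))"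
proof -
  have "(x + - x)^(q^j) = 0" using q_pos by simp
  hence "x^(q^j) + (-x)^(q^j) = 0" by (simp only: frob_add_a)
  thus ?thesis by (simp add: add_eq_0_iff)
qed
lemma frob_minus_p: "(- x :: 'a poly) ^ (q^j) = - (x^(q^j))"
proof -
  have "(x + - x)^(q^j) = 0" using q_pos by simp
  hence "x^(q^j) + (-x)^(q^j) = 0" by (simp only: frob_add_p)
  thus ?thesis by (simp add: add_eq_0_iff)
qed
lemma frob_diff_a: "(x - y :: 'a) ^ (q^j) = x^(q^j) - y^(q^j)"
  using frob_add_a[of x "-y" j] frob_minus_a[of y j] by simp
lemma frob_diff_p: "(x - y :: 'a poly) ^ (q^j) = x^(q^j) - y^(q^j)"
  using frob_add_p[of x "-y" j] frob_minus_p[of y j] by simp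

lemma frob_add1: "(x + y :: 'a) ^ q = x^q + y^q"
  using frob_add_a[of x y 1] by simp
lemma frob_diff1: "(x - y :: 'a) ^ q = x^q - y^q"
  using frob_diff_a[of x y 1] by simp
lemma frob_minus1: "(- x :: 'a) ^ q = - (x^q)"
  using frob_minus_a[of x 1] by simp

lemma Fq_iff: "(x::'a) \<in> Fq q \<longleftrightarrow> x ^ q = x" by (simp add: Fq_def)

lemma Fq_0[simp]: "(0::'a) \<in> Fq q" using q_pos by (simp add: Fq_def)
lemma Fq_1[simp]: "(1::'a) \<in> Fq q" by (simp add: Fq_def)
lemma Fq_add: "(x::'a) \<in> Fq q \<Longrightarrow> y \<in> Fq q \<Longrightarrow> x + y \<in> Fq q"
  unfolding Fq_def using frob_add1[of x y] by simp
lemma Fq_diff: "(x::'a) \<in> Fq q \<Longrightarrow> y \<in> Fq q \<Longrightarrow> x - y \<in> Fq q"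
  unfolding Fq_def using frob_diff1[of x y] by simp
lemma Fq_uminus: "(x::'a) \<in> Fq q \<Longrightarrow> - x \<in> Fq q"
  unfolding Fq_def using frob_minus1[of x] by simp
lemma Fq_mult: "(x::'a) \<in> Fq q \<Longrightarrow> y \<in> Fq q \<Longrightarrow> x * y \<in> Fq q"
  by (simp add: Fq_def power_mult_distrib)
lemma Fq_inverse: "(x::'a) \<in> Fq q \<Longrightarrow> inverse x \<in> Fq q"
  by (simp add: Fq_def power_inverse)
lemma Fq_pow: "(x::'a) \<in> Fq q \<Longrightarrow> x ^ (q^j) = x"
  by (induction j) (auto simp: Fq_def power_mult power_Suc2 simp del: power_Suc)

lemma pow_card_same: "(x::'a) ^ card (UNIV :: 'a set) = x"
proof (cases "x = 0")
  case False
  have "x * (\<Prod>y\<in>UNIV-{0}. x * y) = x * x ^ (card (UNIV :: 'a set) - 1) * \<Prod>(UNIV-{0})"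
    by (simp add: prod.distrib mult_ac)
  also have "x * x ^ (card (UNIV :: 'a set) - 1) = x ^ Suc (card (UNIV :: 'a set) - 1)"
    by (subst power_Suc) auto
  also have "Suc (card (UNIV :: 'a set) - 1) = card (UNIV :: 'a set)"
    using finite_UNIV_card_ge_0[where ?'a = 'a] by simp
  also have "(\<Prod>y\<in>UNIV-{0}. x * y) = (\<Prod>y\<in>UNIV-{0}. y)"
    by (rule prod.reindex_bij_witness[of _ "\<lambda>y. y / x" "\<lambda>y. x * y"]) (use False in auto)
  finally show ?thesis
    by simp
qed (use finite_UNIV_card_ge_0[where ?'a = 'a] in auto)

lemma poly_eq_prod_roots:
  fixes p :: "'a poly"
  assumes S: "finite S" and mon: "lead_coeff p = 1" and deg: "degree p = card S"
    and roots: "\<And>s. s \<in> S \<Longrightarrow> poly p s = 0"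
  shows "p = (\<Prod>s\<in>S. [:-s, 1:])"
proof -
  define P where "P = (\<Prod>s\<in>S. [:-s, 1:] :: 'a poly)"
  have degP: "degree P = card S" unfolding P_def
    by (subst degree_prod_eq_sum_degree) auto
  have monP: "lead_coeff P = 1" unfolding P_def by (simp add: lead_coeff_prod)
  define D where "D = p - P"
  have cD: "coeff D n = 0" if "n \<ge> card S" for n
  proof (cases "n = card S")
    case True thus ?thesis using mon monP deg degP by (simp add: D_def)
  next
    case False
    hence "n > degree p" "n > degree P" using that deg degP by auto
    thus ?thesis by (simp add: D_def coeff_eq_0)
  qed
  show ?thesis
  proof (rule ccontr)
    assume "p \<noteq> (\<Prod>s\<in>S. [:-s, 1:])"
    hence D0: "D \<noteq> 0" by (simp add: D_def P_def)
    have "degree D < card S"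
    proof (rule ccontr)
      assume "\<not> degree D < card S"
      hence "coeff D (degree D) = 0" using cD by simp
      thus False using D0 by simp
    qed
    moreover have "card S \<le> card {x. poly D x = 0}"
    proof -
      have "S \<subseteq> {x. poly D x = 0}"
        using roots S by (auto simp: D_def P_def poly_prod)
      thus ?thesis
      using poly_roots_finite[OF D0] by (intro card_mono)
    qed
    moreover have "card {x. poly D x = 0} \<le> degree D" by (rule card_poly_roots_bound[OF D0])
    ultimately show False by linarith
  qed
qed

lemma poly_zero_many_roots:
  fixes p :: "'a poly"
  assumes "finite S" "degree p < card S" "\<And>s. s \<in> S \<Longrightarrow> poly p s = 0"
  shows "p = 0"
proof (rule ccontr)
  assume p0: "p \<noteq> 0"
  have "S \<subseteq> {x. poly p x = 0}" using assms by auto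
  hence "card S \<le> card {x. poly p x = 0}" using poly_roots_finite[OF p0] by (intro card_mono)
  also have "\<dots> \<le> degree p" by (rule card_poly_roots_bound[OF p0])
  finally show False using assms by simp
qed

end


context ffq begin

abbreviation lin :: "'a poly \<Rightarrow> bool" where "lin f \<equiv> is_linearized q f"

lemma q_gt1: "1 < q" using q_ge2 by simp
lemma q_pow_inj: "q^i = q^j \<longleftrightarrow> i = j" using q_gt1 by simp
lemma q_pow_gt: "j < q^j" using q_ge2 power_gt_expt[of q j] by simp
lemma q_pow_ne0: "q^j \<noteq> 0" using q_pos by simp

lemma lin_coeff0: "lin f \<Longrightarrow> coeff f 0 = 0"
  unfolding is_linearized_def using q_pow_ne0 by (metis)

lemma lin_0[simp]: "lin 0" by (simp add: is_linearized_def)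
lemma lin_monom[simp]: "lin (monom c (q^j))" by (auto simp: is_linearized_def)
lemma lin_X[simp]: "lin [:0,1:]"
  using lin_monom[of 1 0] by (simp add: monom_altdef)
lemma lin_add[simp]: "lin f \<Longrightarrow> lin g \<Longrightarrow> lin (f + g)"
  by (auto simp: is_linearized_def) (metis add.right_neutral)
lemma lin_uminus[simp]: "lin f \<Longrightarrow> lin (- f)"
  by (auto simp: is_linearized_def)
lemma lin_diff[simp]: "lin f \<Longrightarrow> lin g \<Longrightarrow> lin (f - g)"
  by (auto simp: is_linearized_def) (metis diff_self eq_iff_diff_eq_0)
lemma lin_smult[simp]: "lin f \<Longrightarrow> lin (smult c f)"
  by (auto simp: is_linearized_def)
lemma lin_sum: "(\<And>i. i \<in> A \<Longrightarrow> lin (f i)) \<Longrightarrow> lin (sum f A)"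
  by (induction A rule: infinite_finite_induct) auto

lemma lin_repr: assumes "lin f"
  shows "f = (\<Sum>j\<le>degree f. monom (coeff f (q^j)) (q^j))"
proof (rule poly_eqI)
  fix n
  have "coeff (\<Sum>j\<le>degree f. monom (coeff f (q^j)) (q^j)) n
        = (\<Sum>j\<le>degree f. if q^j = n then coeff f (q^j) else 0)"
    by (simp add: coeff_sum)
  also have "\<dots> = coeff f n"
  proof (cases "\<exists>j. n = q^j")
    case True
    then obtain j0 where n: "n = q^j0" by auto
    have "(\<Sum>j\<le>degree f. if q^j = n then coeff f (q^j) else 0)
        = (\<Sum>j\<le>degree f. if j = j0 then coeff f (q^j) else 0)"
      using n q_pow_inj by simp
    also have "\<dots> = (if j0 \<le> degree f then coeff f (q^j0) else 0)"
      by (simp add: sum.delta)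
    also have "\<dots> = coeff f n"
    proof (cases "j0 \<le> degree f")
      case False
      hence "degree f < n" using q_pow_gt[of j0] n by simp
      thus ?thesis using False by (simp add: coeff_eq_0)
    qed (simp add: n)
    finally show ?thesis .
  next
    case False
    hence "coeff f n = 0" using assms unfolding is_linearized_def by auto
    moreover have "(\<Sum>j\<le>degree f. if q^j = n then coeff f (q^j) else 0) = 0"
      using False by (intro sum.neutral) auto
    ultimately show ?thesis by simp
  qed
  finally show "coeff f n = coeff (\<Sum>j\<le>degree f. monom (coeff f (q^j)) (q^j)) n" by simp
qed

lemma smult_sum_right: "smult c (sum f A) = (\<Sum>i\<in>A. smult c (f i))"
  by (induction A rule: infinite_finite_induct) (auto simp: smult_add_right)

lemma pcompose_Xpow: "pcompose ([:0,1:]^n) p = p^n"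
  by (induction n) (simp_all add: pcompose_mult pcompose_pCons pcompose_1)

lemma pcompose_monom: "pcompose (monom c n) p = smult c (p^n)"
  by (simp add: monom_altdef pcompose_smult pcompose_Xpow)

lemma lin_pow: assumes "lin g" shows "lin (g^(q^j))"
proof -
  have "g^(q^j) = (\<Sum>i\<le>degree g. monom (coeff g (q^i)) (q^i))^(q^j)"
    using lin_repr[OF assms] by simp
  also have "\<dots> = (\<Sum>i\<le>degree g. monom (coeff g (q^i) ^ (q^j)) (q^(i+j)))"
    by (simp add: frob_sum_p monom_power power_add)
  finally show ?thesis by (simp add: lin_sum)
qed

lemma lin_pcompose[simp]: assumes "lin f" "lin g" shows "lin (pcompose f g)"
proof -
  have "pcompose f g = (\<Sum>j\<le>degree f. smult (coeff f (q^j)) (g^(q^j)))"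
    by (subst lin_repr[OF assms(1)]) (simp add: pcompose_sum pcompose_monom)
  thus ?thesis using lin_pow[OF assms(2)] by (simp add: lin_sum)
qed

lemma pcomp_add: assumes "lin f" shows "pcompose f (a + b) = pcompose f a + pcompose f b"
proof -
  have "pcompose f (a + b) = (\<Sum>j\<le>degree f. smult (coeff f (q^j)) ((a+b)^(q^j)))"
    by (subst lin_repr[OF assms(1)]) (simp add: pcompose_sum pcompose_monom)
  also have "\<dots> = (\<Sum>j\<le>degree f. smult (coeff f (q^j)) (a^(q^j)))
             + (\<Sum>j\<le>degree f. smult (coeff f (q^j)) (b^(q^j)))"
    by (simp add: frob_add_p smult_add_right sum.distrib)
  also have "\<dots> = pcompose f a + pcompose f b"
    by (subst (3 4) lin_repr[OF assms(1)]) (simp add: pcompose_sum pcompose_monom)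
  finally show ?thesis .
qed

lemma pcomp_zero[simp]: "lin f \<Longrightarrow> pcompose f 0 = 0"
  by (simp add: pcompose_0' lin_coeff0)

lemma pcomp_uminus: assumes "lin f" shows "pcompose f (- a) = - pcompose f a"
  using pcomp_add[OF assms, of a "-a"] assms by (simp add: add_eq_0_iff)

lemma pcomp_diff: assumes "lin f" shows "pcompose f (a - b) = pcompose f a - pcompose f b"
  using pcomp_add[OF assms, of a "-b"] pcomp_uminus[OF assms, of b] by simp

lemma pcomp_smult: assumes "lin f" "c \<in> Fq q"
  shows "pcompose f (smult c a) = smult c (pcompose f a)"
proof -
  have "pcompose f (smult c a) = (\<Sum>j\<le>degree f. smult (coeff f (q^j)) ((smult c a)^(q^j)))"
    by (subst lin_repr[OF assms(1)]) (simp add: pcompose_sum pcompose_monom)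
  also have "\<dots> = smult c (\<Sum>j\<le>degree f. smult (coeff f (q^j)) (a^(q^j)))"
    by (simp add: smult_power Fq_pow[OF assms(2)] smult_sum_right mult.commute)
  also have "\<dots> = smult c (pcompose f a)"
    by (subst (3) lin_repr[OF assms(1)]) (simp add: pcompose_sum pcompose_monom)
  finally show ?thesis .
qed

lemma pcomp_sum: assumes "lin f" shows "pcompose f (sum h A) = (\<Sum>i\<in>A. pcompose f (h i))"
  using assms by (induction A rule: infinite_finite_induct) (auto simp: pcomp_add)

lemma poly_lin_add: assumes "lin f" shows "poly f (x + y) = poly f x + poly f y"
proof -
  have "[:poly f (x+y):] = pcompose f ([:x:] + [:y:])" by (simp add: pcompose_pCons_0)
  also have "\<dots> = [:poly f x + poly f y:]" by (subst pcomp_add[OF assms]) (simp add: pcompose_pCons_0)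
  finally show ?thesis by simp
qed

lemma poly_lin_0[simp]: "lin f \<Longrightarrow> poly f 0 = 0"
  by (simp add: poly_0_coeff_0 lin_coeff0)

lemma poly_lin_uminus: assumes "lin f" shows "poly f (- x) = - poly f x"
  using poly_lin_add[OF assms, of x "-x"] assms by (simp add: add_eq_0_iff)

lemma poly_lin_diff: assumes "lin f" shows "poly f (x - y) = poly f x - poly f y"
  using poly_lin_add[OF assms, of x "-y"] poly_lin_uminus[OF assms, of y] by simp

lemma poly_lin_smult: assumes "lin f" "c \<in> Fq q" shows "poly f (c * x) = c * poly f x"
proof -
  have "[:poly f (c*x):] = pcompose f (smult c [:x:])" by (simp add: pcompose_pCons_0)
  also have "\<dots> = [:c * poly f x:]" by (subst pcomp_smult[OF assms]) (simp add: pcompose_pCons_0)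
  finally show ?thesis by simp
qed

lemma poly_lin_sum: assumes "lin f" shows "poly f (sum h A) = (\<Sum>i\<in>A. poly f (h i))"
  using assms by (induction A rule: infinite_finite_induct) (auto simp: poly_lin_add)

lemma lin_degree: assumes "lin f" "f \<noteq> 0" shows "degree f = q ^ qdegn q f"
proof -
  have "coeff f (degree f) \<noteq> 0" using assms by simp
  then obtain j where j: "degree f = q^j" using assms unfolding is_linearized_def by blast
  have "qdegn q f = j" unfolding qdegn_def
  proof (rule Max_eqI)
    show "finite {i. coeff f (q ^ i) \<noteq> 0}"
    proof (rule finite_subset)
      show "{i. coeff f (q ^ i) \<noteq> 0} \<subseteq> {..j}"
      proof
        fix i assume "i \<in> {i. coeff f (q ^ i) \<noteq> 0}"
        hence "q^i \<le> q^j" using j le_degree by fastforce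
        thus "i \<in> {..j}" using q_gt1 by simp
      qed
    qed simp
    show "\<And>i. i \<in> {i. coeff f (q ^ i) \<noteq> 0} \<Longrightarrow> i \<le> j"
      using j le_degree q_gt1 by fastforce
    show "j \<in> {i. coeff f (q ^ i) \<noteq> 0}" using j \<open>coeff f (degree f) \<noteq> 0\<close> by simp
  qed
  thus ?thesis using j by simp
qed

lemma lin_lead: assumes "lin f" "f \<noteq> 0" shows "coeff f (q ^ qdegn q f) \<noteq> 0"
  using lin_degree[OF assms] assms by (metis leading_coeff_0_iff)

lemma qd_le_iff: assumes "lin f" "f \<noteq> 0" "lin g" "g \<noteq> 0"
  shows "qdegn q f \<le> qdegn q g \<longleftrightarrow> degree f \<le> degree g"
  using lin_degree[OF assms(1,2)] lin_degree[OF assms(3,4)] q_gt1 by simp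

lemma qd_less_iff: assumes "lin f" "f \<noteq> 0" "lin g" "g \<noteq> 0"
  shows "qdegn q f < qdegn q g \<longleftrightarrow> degree f < degree g"
  using lin_degree[OF assms(1,2)] lin_degree[OF assms(3,4)] q_gt1 by simp

lemma qd_smult: "c \<noteq> 0 \<Longrightarrow> qdegn q (smult c f) = qdegn q f"
  by (simp add: qdegn_def)

lemma qd_uminus: "qdegn q (- f) = qdegn q f"
  by (simp add: qdegn_def)

lemma qd_add_le: assumes "lin f" "lin g" "f \<noteq> 0" "g \<noteq> 0" "f + g \<noteq> 0"
  shows "qdegn q (f + g) \<le> max (qdegn q f) (qdegn q g)"
proof -
  have "degree (f + g) \<le> max (degree f) (degree g)" by (rule degree_add_le_max)
  thus ?thesis using qd_le_iff assms lin_add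
    by (cases "degree f \<le> degree g") (auto simp: max_def)
qed

lemma qd_add_eq: assumes "lin f" "lin g" "f \<noteq> 0" "g = 0 \<or> qdegn q g < qdegn q f"
  shows "f + g \<noteq> 0 \<and> qdegn q (f + g) = qdegn q f"
proof (cases "g = 0")
  case False
  hence "qdegn q g < qdegn q f" using assms by simp
  hence dl: "degree g < degree f" using qd_less_iff assms False by blast
  hence "degree (f + g) = degree f" by (rule degree_add_eq_left)
  moreover have "f + g \<noteq> 0" using dl assms(3)
    by (metis add_cancel_right_left degree_add_eq_left less_not_refl)
  ultimately show ?thesis using lin_degree assms lin_add q_gt1 by (metis power_inject_exp)
qed (use assms in simp)

lemma lin_degree_pos: "lin f \<Longrightarrow> f \<noteq> 0 \<Longrightarrow> degree f > 0"
  using lin_degree q_pos by simp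

lemma qd_comp: assumes "lin f" "lin g" "f \<noteq> 0" "g \<noteq> 0"
  shows "pcompose f g \<noteq> 0 \<and> qdegn q (pcompose f g) = qdegn q f + qdegn q g"
proof -
  have nz: "pcompose f g \<noteq> 0" using pcompose_eq_0 lin_degree_pos[OF assms(2,4)] assms(3) by blast
  have "degree (pcompose f g) = q^(qdegn q f + qdegn q g)"
    by (simp add: degree_pcompose lin_degree assms power_add)
  thus ?thesis using lin_degree[OF lin_pcompose[OF assms(1,2)] nz] nz q_gt1 by simp
qed

lemma deg_diff_lt: fixes p s :: "'a poly"
  assumes "degree p = degree s" "lead_coeff p = lead_coeff s" "p \<noteq> s"
  shows "degree (p - s) < degree p"
proof (rule ccontr)
  assume "\<not> degree (p - s) < degree p"
  hence ge: "degree (p - s) \<ge> degree p" by simp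
  have "p - s \<noteq> 0" using assms by simp
  hence "coeff (p - s) (degree (p - s)) \<noteq> 0" using leading_coeff_0_iff by blast
  moreover have "coeff (p - s) n = 0" if "n \<ge> degree p" for n
    using that assms by (cases "n = degree p") (auto simp: coeff_eq_0)
  ultimately show False using ge by auto
qed

lemma rdiv: assumes g: "lin g" "g \<noteq> 0" and f: "lin f"
  shows "\<exists>a r. lin a \<and> lin r \<and> f = pcompose a g + r \<and> (r = 0 \<or> degree r < degree g)"
  using f
proof (induction "degree f" arbitrary: f rule: less_induct)
  case less
  show ?case
  proof (cases "f = 0 \<or> degree f < degree g")
    case True
    thus ?thesis using less.prems by (intro exI[of _ 0] exI[of _ f]) auto
  next
    case False
    hence f0: "f \<noteq> 0" and dge: "degree g \<le> degree f" by auto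
    define s where "s = qdegn q f"
    define t where "t = qdegn q g"
    have ts: "t \<le> s" using qd_le_iff[OF g less.prems f0] dge by (simp add: s_def t_def)
    define N where "N = q^(s-t)"
    define c where "c = lead_coeff f / lead_coeff g ^ N"
    define h where "h = monom c N"
    have hl: "lin h" by (simp add: h_def N_def)
    have gN: "degree (g^N) = degree f"
      using ts by (simp add: degree_power_eq g lin_degree f0 less.prems s_def t_def N_def
          flip: power_add)
    have lcg: "lead_coeff g \<noteq> 0" using g by simp
    have ph: "pcompose h g = smult c (g^N)" by (simp add: h_def pcompose_monom)
    have c0: "c \<noteq> 0" using f0 lcg by (simp add: c_def)
    have deq: "degree (pcompose h g) = degree f" using ph c0 gN by simp
    have leq: "lead_coeff (pcompose h g) = lead_coeff f"
      using ph lcg by (simp add: lead_coeff_smult lead_coeff_power c_def)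
    define f' where "f' = f - pcompose h g"
    have lf': "lin f'" using less.prems hl g by (simp add: f'_def)
    show ?thesis
    proof (cases "f' = 0")
      case True
      thus ?thesis using hl by (intro exI[of _ h] exI[of _ 0]) (auto simp: f'_def)
    next
      case False
      hence "degree f' < degree f" unfolding f'_def using deg_diff_lt deq leq by (metis eq_iff_diff_eq_0)
      from less.hyps[OF this lf'] obtain a r where ar: "lin a" "lin r" "f' = pcompose a g + r"
        "r = 0 \<or> degree r < degree g" by blast
      show ?thesis
        using ar hl by (intro exI[of _ "a + h"] exI[of _ r]) (auto simp: pcompose_add f'_def algebra_simps)
    qed
  qed
qed

end


context ffq begin


abbreviation FQ :: "'a set" where "FQ \<equiv> Fq q"
abbreviation span :: "'a list \<Rightarrow> 'a set" where "span g \<equiv> Fq_span q g"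
abbreviation PI :: "'a list \<Rightarrow> 'a poly" where "PI g \<equiv> Pi_g q g"
abbreviation indep :: "'a list \<Rightarrow> bool" where "indep g \<equiv> Fq_lin_indep q g"

lemma deg_diff_left: "degree s < degree p \<Longrightarrow> degree (p - s) = degree (p::'a poly)"
  using degree_add_eq_left[of "-s" p] by simp
lemma lc_diff_left: "degree s < degree p \<Longrightarrow> lead_coeff (p - s) = lead_coeff (p::'a poly)"
  using deg_diff_left[of s p] by (simp add: coeff_eq_0)

abbreviation XqX :: "'a poly" where "XqX \<equiv> monom 1 q - [:0,1:]"

lemma poly_XqX: "poly XqX x = x^q - x" by (simp add: poly_monom)

lemma degree_XqX: "degree XqX = q"
proof -
  have "degree [:0,1::'a:] < degree (monom (1::'a) q)" using q_ge2 by (simp add: degree_monom_eq)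
  thus ?thesis by (simp add: deg_diff_left lc_diff_left degree_monom_eq)
qed

lemma XqX_nz: "XqX \<noteq> 0" using degree_XqX q_ge2 by auto

lemma Fq_roots: "FQ = {x. poly XqX x = 0}" by (auto simp: Fq_def poly_monom)

lemma XqX_dvd: "XqX dvd (monom 1 (q^j) - [:0,1:])"
proof (induction j)
  case 0 thus ?case by (simp add: monom_altdef)
next
  case (Suc j)
  define A where "A = (monom 1 (q^j) - [:0,1::'a:])"
  have "A^(q^1) = monom 1 (q^j) ^ (q^1) - [:0,1:]^(q^1)" unfolding A_def by (rule frob_diff_p)
  moreover have "monom (1::'a) (q^j) ^ (q^1) = monom 1 (q^Suc j)" by (simp add: monom_power mult.commute)
  moreover have "[:0,1::'a:] ^ (q^1) = monom 1 q" by (simp add: monom_altdef)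
  ultimately have "A^q = monom 1 (q^Suc j) - monom 1 q" by simp
  hence eq: "monom 1 (q^Suc j) - [:0,1:] = A^q + XqX" by simp
  have "XqX dvd A" using Suc by (simp add: A_def)
  moreover have "A dvd A^q" using q_pos by (intro dvd_power) simp
  ultimately have "XqX dvd A^q" by (rule dvd_trans)
  thus ?case unfolding eq by simp
qed

lemma card_Fq: "card (FQ) = q"
proof (rule antisym)
  show "card (FQ) \<le> q" unfolding Fq_roots using card_poly_roots_bound[OF XqX_nz] degree_XqX by simp
next
  define A where "A = (monom 1 (q^m) - [:0,1::'a:])"
  obtain H where H: "A = XqX * H" using XqX_dvd[of m] unfolding A_def by (elim dvdE)
  have qm: "q \<le> q^m" using power_increasing[OF m_pos, of q] q_pos by simp
  have qm2: "1 < q^m" using q_gt1 qm by linarith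
  have degA: "degree A = q^m"
  proof -
    have "degree [:0,1::'a:] < degree (monom (1::'a) (q^m))" using qm2 by (simp add: degree_monom_eq)
    thus ?thesis by (simp add: A_def deg_diff_left degree_monom_eq)
  qed
  have A0: "A \<noteq> 0" proof assume "A = 0" thus False using degA qm2 q_pos by simp qed
  hence H0: "H \<noteq> 0" using H by auto
  have degH: "degree H = q^m - q" using degA H XqX_nz H0 degree_XqX by (simp add: degree_mult_eq)
  have "(UNIV::'a set) \<subseteq> {x. poly XqX x = 0} \<union> {x. poly H x = 0}"
  proof
    fix x :: 'a
    have "poly A x = 0" using pow_card_same[of x] card_UNIV by (simp add: A_def poly_monom)
    thus "x \<in> {x. poly XqX x = 0} \<union> {x. poly H x = 0}" using H by simp
  qed
  hence "card (UNIV::'a set) \<le> card ({x. poly XqX x = 0} \<union> {x. poly H x = 0})"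
    by (intro card_mono) auto
  also have "\<dots> \<le> card {x. poly XqX x = 0} + card {x. poly H x = 0}" by (rule card_Un_le)
  also have "card {x. poly H x = 0} \<le> q^m - q" using card_poly_roots_bound[OF H0] degH by simp
  finally show "q \<le> card (FQ)" using card_UNIV qm unfolding Fq_roots by linarith
qed

lemma finite_Fq: "finite (FQ)" by simp

lemma prod_Fq_scaled: assumes z: "z \<noteq> 0"
  shows "(\<Prod>c\<in>FQ. [:-(c*z), 1:]) = monom 1 q - monom (z^(q-1)) 1"
proof -
  define S where "S = (\<lambda>c. c*z) ` FQ"
  have inj: "inj_on (\<lambda>c. c*z) (FQ)" using z by (auto simp: inj_on_def)
  have cS: "card S = q" using card_image[OF inj] card_Fq by (simp add: S_def)
  have "monom 1 q - monom (z^(q-1)) 1 = (\<Prod>s\<in>S. [:-s, 1:])"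
  proof (rule poly_eq_prod_roots)
    show "finite S" by simp
    have dl: "degree (monom (z^(q-1)) 1) < degree (monom (1::'a) q)"
      by (rule le_less_trans[OF degree_monom_le]) (use q_gt1 in \<open>simp add: degree_monom_eq\<close>)
    show "lead_coeff (monom 1 q - monom (z^(q-1)) 1) = 1"
      using lc_diff_left[OF dl] q_pos by (simp add: degree_monom_eq)
    show "degree (monom 1 q - monom (z^(q-1)) 1) = card S"
      using deg_diff_left[OF dl] cS by (simp add: degree_monom_eq)
    fix s assume "s \<in> S"
    then obtain c where c: "c \<in> FQ" "s = c*z" by (auto simp: S_def)
    have sq: "Suc (q-1) = q" using q_pos by simp
    have "z^(q-1) * z = z^q" using power_Suc2[of z "q-1"] sq by simp
    hence "z^(q-1) * (c * z) = c * z^q" by (simp add: algebra_simps)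
    moreover have "(c*z)^q = c * z^q" using c(1) by (simp add: power_mult_distrib Fq_def)
    ultimately have e2: "(c*z)^q - z^(q-1)*(c*z) = 0" by (metis eq_iff_diff_eq_0)
    have "poly (monom 1 q - monom (z^(q-1)) 1) s = (c*z)^q - z^(q-1)*(c*z)"
      using c by (simp add: poly_monom)
    thus "poly (monom 1 q - monom (z^(q-1)) 1) s = 0" using e2 by simp
  qed
  also have "\<dots> = (\<Prod>c\<in>FQ. [:-(c*z), 1:])"
    unfolding S_def by (subst prod.reindex[OF inj]) simp
  finally show ?thesis by simp
qed

end


context ffq begin
lemma span_memI: "(\<forall>i<length g. c i \<in> FQ) \<Longrightarrow> x = (\<Sum>i<length g. c i * g ! i) \<Longrightarrow> x \<in> span g"
  unfolding Fq_span_def by blast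

lemma span_Nil: "span [] = {0}" by (simp add: Fq_span_def)

lemma span_snoc: "span (g @ [h]) = {u + c * h | u c. u \<in> span g \<and> c \<in> FQ}"
proof (intro Set.set_eqI iffI)
  fix x assume "x \<in> span (g @ [h])"
  then obtain c where c: "\<forall>i<Suc (length g). c i \<in> FQ" "x = (\<Sum>i<Suc (length g). c i * (g@[h]) ! i)"
    by (auto simp: Fq_span_def)
  have "x = (\<Sum>i<length g. c i * g ! i) + c (length g) * h"
    using c(2) by (simp add: nth_append)
  moreover have "(\<Sum>i<length g. c i * g ! i) \<in> span g"
    using c(1) by (auto simp: Fq_span_def)
  ultimately show "x \<in> {u + c * h | u c. u \<in> span g \<and> c \<in> FQ}" using c(1) by auto
next
  fix x assume "x \<in> {u + c * h | u c. u \<in> span g \<and> c \<in> FQ}"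
  then obtain u d c where ud: "x = u + d * h" "d \<in> FQ" "\<forall>i<length g. c i \<in> FQ"
    "u = (\<Sum>i<length g. c i * g ! i)" by (auto simp: Fq_span_def)
  define c' where "c' i = (if i < length g then c i else d)" for i
  have "x = (\<Sum>i<Suc (length g). c' i * (g@[h]) ! i)"
    using ud by (simp add: nth_append c'_def)
  moreover have "\<forall>i<length (g@[h]). c' i \<in> FQ" using ud by (simp add: c'_def)
  ultimately show "x \<in> span (g @ [h])" unfolding Fq_span_def by force
qed

lemma span_0: "0 \<in> span g"
  unfolding Fq_span_def by (rule CollectI, rule exI[of _ "\<lambda>_. 0"]) simp

lemma span_add: assumes "x \<in> span g" "y \<in> span g" shows "x + y \<in> span g"
proof -
  obtain c d where "\<forall>i<length g. c i \<in> FQ" "x = (\<Sum>i<length g. c i * g ! i)"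
    "\<forall>i<length g. d i \<in> FQ" "y = (\<Sum>i<length g. d i * g ! i)" using assms by (auto simp: Fq_span_def)
  hence "\<forall>i<length g. c i + d i \<in> FQ" "x + y = (\<Sum>i<length g. (c i + d i) * g ! i)"
    by (auto simp: Fq_add sum.distrib algebra_simps)
  thus ?thesis by (rule span_memI)
qed

lemma span_smult: assumes "x \<in> span g" "a \<in> FQ" shows "a * x \<in> span g"
proof -
  obtain c where "\<forall>i<length g. c i \<in> FQ" "x = (\<Sum>i<length g. c i * g ! i)"
    using assms by (auto simp: Fq_span_def)
  hence "\<forall>i<length g. a * c i \<in> FQ" "a * x = (\<Sum>i<length g. (a * c i) * g ! i)"
    using assms(2) by (auto simp: Fq_mult sum_distrib_left algebra_simps)
  thus ?thesis by (rule span_memI)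
qed

lemma span_uminus: "x \<in> span g \<Longrightarrow> - x \<in> span g"
  using span_smult[of x g "-1"] Fq_uminus[OF Fq_1] by simp

lemma span_diff: "x \<in> span g \<Longrightarrow> y \<in> span g \<Longrightarrow> x - y \<in> span g"
  using span_add[of x g "-y"] span_uminus[of y g] by simp

lemma span_nth: assumes "i < length g" shows "g ! i \<in> span g"
proof -
  define c where "c j = (if j = i then 1 else (0::'a))" for j
  have "(\<Sum>j<length g. c j * g ! j) = (\<Sum>j<length g. if j = i then g ! j else 0)"
    by (intro sum.cong) (auto simp: c_def)
  also have "\<dots> = g ! i" using assms by (simp add: sum.delta)
  finally have "(\<Sum>j<length g. c j * g ! j) = g ! i" .
  moreover have "\<forall>j<length g. c j \<in> FQ" by (simp add: c_def)
  ultimately show ?thesis unfolding Fq_span_def by force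
qed

lemma finite_span: "finite (span g)" by simp

lemma lin_vanish_span: assumes "lin f" "\<And>i. i < length g \<Longrightarrow> poly f (g ! i) = 0"
  "x \<in> span g" shows "poly f x = 0"
proof -
  obtain c where c: "\<forall>i<length g. c i \<in> FQ" "x = (\<Sum>i<length g. c i * g ! i)"
    using assms by (auto simp: Fq_span_def)
  thus ?thesis using assms by (simp add: poly_lin_sum poly_lin_smult)
qed

lemma indep_snoc: assumes "indep (g @ [h])"
  shows "indep g" "h \<notin> span g"
proof -
  show "indep g" unfolding Fq_lin_indep_def
  proof (intro allI impI)
    fix c i assume c: "\<forall>i<length g. c i \<in> FQ" "(\<Sum>i<length g. c i * g ! i) = 0" "i < length g"
    define c' where "c' j = (if j < length g then c j else 0)" for j
    have "\<forall>j<length (g@[h]). c' j \<in> FQ" using c by (simp add: c'_def)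
    moreover have "(\<Sum>j<length (g@[h]). c' j * (g@[h]) ! j) = 0" using c by (simp add: c'_def nth_append)
    ultimately have "\<forall>j<length (g@[h]). c' j = 0" using assms unfolding Fq_lin_indep_def by blast
    hence "c' i = 0" using c(3) by simp
    thus "c i = 0" using c(3) by (simp add: c'_def)
  qed
  show "h \<notin> span g"
  proof
    assume "h \<in> span g"
    then obtain c where c: "\<forall>i<length g. c i \<in> FQ" "h = (\<Sum>i<length g. c i * g ! i)"
      by (auto simp: Fq_span_def)
    define c' where "c' j = (if j < length g then c j else -1)" for j
    have "\<forall>j<length (g@[h]). c' j \<in> FQ" using c Fq_uminus[OF Fq_1] by (simp add: c'_def)
    moreover have "(\<Sum>j<length (g@[h]). c' j * (g@[h]) ! j) = 0" using c by (simp add: c'_def nth_append)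
    ultimately have "\<forall>j<length (g@[h]). c' j = 0" using assms unfolding Fq_lin_indep_def by blast
    hence "c' (length g) = 0" by simp
    thus False by (simp add: c'_def)
  qed
qed

lemma indep_append: "indep (g @ h) \<Longrightarrow> indep g"
proof (induction h rule: rev_induct)
  case (snoc x xs) thus ?case using indep_snoc(1)[of "g @ xs" x] by simp
qed simp

lemma snoc_inj: assumes "h \<notin> span g"
  shows "inj_on (\<lambda>(u, c). u + c * h) (span g \<times> FQ)"
proof (rule inj_onI, clarsimp)
  fix u c u' c' assume A: "u \<in> span g" "c \<in> FQ" "u' \<in> span g" "c' \<in> FQ"
    "u + c * h = u' + c' * h"
  show "u = u' \<and> c = c'"
  proof (cases "c = c'")
    case True thus ?thesis using A by simp
  next
    case False
    have "(c - c') * h = u' - u" using A(5) by (simp add: algebra_simps)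
    hence "h = inverse (c - c') * (u' - u)" using False by (simp add: field_simps)
    moreover have "inverse (c - c') * (u' - u) \<in> span g"
      using A by (intro span_smult span_diff Fq_inverse Fq_diff)
    ultimately show ?thesis using assms by simp
  qed
qed

lemma span_snoc_image: "span (g @ [h]) = (\<lambda>(u, c). u + c * h) ` (span g \<times> FQ)"
  unfolding span_snoc by auto

lemma card_span: "indep g \<Longrightarrow> card (span g) = q ^ length g"
proof (induction g rule: rev_induct)
  case Nil thus ?case by (simp add: span_Nil)
next
  case (snoc h g)
  note ind = indep_snoc[OF snoc.prems]
  have "card (span (g @ [h])) = card (span g \<times> FQ)"
    unfolding span_snoc_image by (rule card_image[OF snoc_inj[OF ind(2)]])
  thus ?case using snoc.IH[OF ind(1)] card_Fq by (simp add: card_cartesian_product)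
qed

end


context ffq begin
lemma Pi_nz: "PI g \<noteq> 0" by (simp add: Pi_g_def)

lemma poly_Pi_0_iff: "poly (PI g) x = 0 \<longleftrightarrow> x \<in> span g"
  by (simp add: Pi_g_def poly_prod)

lemma degree_Pi: "degree (PI g) = card (span g)"
  by (simp add: Pi_g_def degree_prod_eq_sum_degree)

lemma pcompose_lin1: "lin f \<Longrightarrow> pcompose f [:a, 1:] = f + [:poly f a:]"
proof -
  assume l: "lin f"
  have "[:a, 1:] = [:0,1:] + [:a:]" by simp
  hence "pcompose f [:a, 1:] = pcompose f ([:0,1:] + [:a:])" by simp
  also have "\<dots> = f + [:poly f a:]" by (subst pcomp_add[OF l]) (simp add: pcompose_pCons_0)
  finally show ?thesis .
qed

lemma lin_Pi: "indep g \<Longrightarrow> lin (PI g)"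
proof (induction g rule: rev_induct)
  case Nil
  have "PI [] = [:0,1:]" by (simp add: Pi_g_def span_Nil)
  thus ?case by simp
next
  case (snoc h g)
  note ind = indep_snoc[OF snoc.prems]
  define P where "P = PI g"
  have lP: "lin P" using snoc.IH[OF ind(1)] by (simp add: P_def)
  define z where "z = poly P h"
  have z0: "z \<noteq> 0" using ind(2) by (simp add: z_def P_def poly_Pi_0_iff)
  have "PI (g @ [h]) = (\<Prod>x\<in>span g \<times> FQ. [:- (case x of (u, c) \<Rightarrow> u + c * h), 1:])"
    unfolding Pi_g_def span_snoc_image by (subst prod.reindex[OF snoc_inj[OF ind(2)]]) (simp add: o_def)
  also have "\<dots> = (\<Prod>(u,c)\<in>span g \<times> FQ. [:- (u + c * h), 1:])"
    by (simp add: case_prod_unfold)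
  also have "\<dots> = (\<Prod>c\<in>FQ. \<Prod>u\<in>span g. [:- (u + c * h), 1:])"
    by (subst prod.swap) (simp add: prod.cartesian_product[symmetric])
  also have "\<dots> = (\<Prod>c\<in>FQ. pcompose [:-(c*z), 1:] P)"
  proof (rule prod.cong[OF refl])
    fix c assume c: "c \<in> FQ"
    have "(\<Prod>u\<in>span g. [:- (u + c * h), 1:]) = (\<Prod>u\<in>span g. pcompose [:-u, 1:] [:-(c*h), 1:])"
      by (intro prod.cong refl) (simp add: pcompose_pCons algebra_simps)
    also have "\<dots> = pcompose P [:-(c*h), 1:]" by (simp add: P_def Pi_g_def pcompose_prod)
    also have "\<dots> = P + [:poly P (-(c*h)):]" by (rule pcompose_lin1[OF lP])
    also have "poly P (-(c*h)) = -(c*z)" using lP c by (simp add: poly_lin_uminus poly_lin_smult z_def)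
    also have "P + [:-(c*z):] = pcompose [:-(c*z), 1:] P" by (simp add: pcompose_pCons)
    finally show "(\<Prod>u\<in>span g. [:- (u + c * h), 1:]) = pcompose [:-(c*z), 1:] P" .
  qed
  also have "\<dots> = pcompose (\<Prod>c\<in>FQ. [:-(c*z), 1:]) P" by (simp add: pcompose_prod)
  also have "\<dots> = pcompose (monom 1 (q^1) - monom (z^(q-1)) (q^0)) P" using z0 by (simp add: prod_Fq_scaled)
  finally have e: "PI (g @ [h]) = pcompose (monom 1 (q^1) - monom (z^(q-1)) (q^0)) P" .
  have "lin (monom 1 (q^1) - monom (z^(q-1)) (q^0))" by (intro lin_diff lin_monom)
  thus ?case unfolding e using lP by (intro lin_pcompose)
qed

end


interpretation evh: comm_semiring_hom "\<lambda>p. poly p a" by (unfold_locales, auto)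
interpretation evh: comm_ring_hom "\<lambda>p. poly p a"..
interpretation cph: comm_semiring_hom "\<lambda>c::'b::comm_ring_1. [:c:]" by (unfold_locales, auto)
interpretation cph: comm_ring_hom "\<lambda>c::'b::comm_ring_1. [:c:]"..

lemma const_pow: "[:(c::'b::comm_semiring_1):] ^ n = [:c ^ n:]" by (induction n) (auto simp: mult.commute)
lemma neg1pow: "(-1::'b::comm_ring_1 poly)^k = [:(-1)^k:]" by (induction k) auto

context ffq begin

lemma Mn_carrier: "Mn q (g::'a list) \<in> carrier_mat (length g) (length g)" by (simp add: Mn_def)

lemma Mn_index: "j < length g \<Longrightarrow> l < length g \<Longrightarrow> Mn q (g::'a list) $$ (j, l) = (g ! l) ^ (q ^ j)"
  by (simp add: Mn_def)

lemma det_Mn_nz: assumes ind: "indep g" shows "det (Mn q g) \<noteq> 0"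
proof
  define n where "n = length g"
  assume "det (Mn q g) = 0"
  hence "det (transpose_mat (Mn q g)) = 0" using det_transpose[OF Mn_carrier] by simp
  then obtain v where v: "v \<in> carrier_vec n" "v \<noteq> 0\<^sub>v n" "transpose_mat (Mn q g) *\<^sub>v v = 0\<^sub>v n"
    using det_0_iff_vec_prod_zero_field[of "transpose_mat (Mn q g)" n] Mn_carrier
    by (auto simp: n_def)
  define A where "A = (\<Sum>j<n. monom (v $ j) (q^j))"
  have lA: "lin A" unfolding A_def by (intro lin_sum) simp
  have rootsg: "poly A (g ! l) = 0" if l: "l < length g" for l
  proof -
    have "(transpose_mat (Mn q g) *\<^sub>v v) $ l = 0" using v(3) l by (simp add: n_def)
    hence "(\<Sum>j\<in>{0..<n}. (g ! l) ^ (q^j) * v $ j) = 0"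
      using l v(1) by (simp add: scalar_prod_def Mn_def n_def row_def)
    moreover have "poly A (g ! l) = (\<Sum>j<n. v $ j * (g ! l) ^ (q^j))"
      by (simp add: A_def poly_sum poly_monom)
    ultimately show ?thesis by (simp add: atLeast0LessThan mult.commute)
  qed
  have "A = 0"
  proof (rule poly_zero_many_roots)
    show "finite (span g)" by simp
    show "\<And>s. s \<in> span g \<Longrightarrow> poly A s = 0" using lin_vanish_span[OF lA rootsg] by blast
    have "\<forall>i>q^n - 1. coeff A i = 0"
    proof (intro allI impI)
      fix i assume i: "i > q^n - 1"
      have "coeff A i = (\<Sum>j<n. if q^j = i then v $ j else 0)" by (simp add: A_def coeff_sum)
      also have "\<dots> = 0"
      proof (intro sum.neutral ballI)
        fix j assume "j \<in> {..<n}"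
        hence "q^j < q^n" using q_gt1 by simp
        thus "(if q^j = i then v $ j else 0) = 0" using i by auto
      qed
      finally show "coeff A i = 0" .
    qed
    hence "degree A \<le> q^n - 1" by (rule degree_le)
    moreover have "q^n > 0" using q_pos by simp
    ultimately show "degree A < card (span g)" using card_span[OF ind] unfolding n_def by linarith
  qed
  have "v = 0\<^sub>v n"
  proof (rule eq_vecI)
    fix j assume "j < dim_vec (0\<^sub>v n)"
    hence j: "j < n" by simp
    have "coeff A (q^j) = (\<Sum>i<n. if i = j then v $ i else 0)"
      by (simp add: A_def coeff_sum q_pow_inj)
    also have "\<dots> = v $ j" using j by (simp add: sum.delta)
    finally show "v $ j = 0\<^sub>v n $ j" using \<open>A = 0\<close> j by simp
  qed (use v(1) in simp)
  thus False using v(2) by simp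
qed

definition colsD :: "'a list \<Rightarrow> nat \<Rightarrow> 'a poly list" where
  "colsD g i = (let cols = map (\<lambda>c. [:c:]) g @ [[:0, 1:]] in take i cols @ drop (Suc i) cols)"

lemma Dmat_alt: "Dmat q (g::'a list) i = mat (length g) (length g) (\<lambda>(j,l). (colsD g i ! l) ^ (q ^ j))"
  by (simp add: Dmat_def colsD_def Let_def)

lemma colsD_nth: assumes "i < length g" "l < length g"
  shows "colsD g i ! l = (if l < i then [:g ! l:] else if Suc l < length g then [:g ! Suc l:] else [:0,1:])"
  using assms by (auto simp: colsD_def nth_append min_def)

lemma Dmat_carrier: "Dmat q (g::'a list) i \<in> carrier_mat (length g) (length g)" by (simp add: Dmat_alt)

lemma Dmat_index: "j < length g \<Longrightarrow> l < length g \<Longrightarrow> Dmat q (g::'a list) i $$ (j, l) = (colsD g i ! l) ^ (q ^ j)"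
  by (simp add: Dmat_alt)

lemma lin_det_Dmat: assumes i: "i < length g" shows "lin (det (Dmat q g i))"
proof -
  define n where "n = length g"
  have n1: "n - 1 < n" using i by (simp add: n_def)
  define D where "D = Dmat q g i"
  have Dc: "D \<in> carrier_mat n n" by (simp add: D_def n_def Dmat_carrier)
  have "det D = (\<Sum>j<n. D $$ (j, n-1) * cofactor D j (n-1))"
    by (rule laplace_expansion_column[OF Dc n1])
  also have "\<dots> = (\<Sum>j<n. smult ((-1)^(j + (n-1)) *
        poly (det (mat_delete D j (n-1))) 0) (monom 1 (q^j)))"
  proof (rule sum.cong[OF refl])
    fix j assume j: "j \<in> {..<n}"
    have sn: "Suc (n-1) = n" "\<not> n - 1 < i" using i by (auto simp: n_def)
    have Dj: "D $$ (j, n-1) = monom 1 (q^j)"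
      using j i n1 sn by (simp add: D_def Dmat_index colsD_nth n_def monom_altdef)
    have cst: "mat_delete D j (n-1) = map_mat (\<lambda>c. [:c:]) (map_mat (\<lambda>p. poly p 0) (mat_delete D j (n-1)))"
    proof (rule eq_matI)
      fix a b assume ab: "a < dim_row (map_mat (\<lambda>c. [:c:]) (map_mat (\<lambda>p. poly p 0) (mat_delete D j (n-1))))"
        "b < dim_col (map_mat (\<lambda>c. [:c:]) (map_mat (\<lambda>p. poly p 0) (mat_delete D j (n-1))))"
      hence ab': "a < n - 1" "b < n - 1" using Dc by auto
      have "mat_delete D j (n-1) $$ (a, b) = D $$ (if a < j then a else Suc a, b)"
        using ab' Dc by (simp add: mat_delete_def)
      also have "\<dots> = [: (if b < i then g ! b else g ! Suc b) ^ (q ^ (if a < j then a else Suc a)) :]"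
        using ab' i by (auto simp: D_def Dmat_index colsD_nth n_def const_pow)
      finally show "mat_delete D j (n-1) $$ (a, b) =
          map_mat (\<lambda>c. [:c:]) (map_mat (\<lambda>p. poly p 0) (mat_delete D j (n-1))) $$ (a, b)"
        using ab' Dc by simp
    qed (use Dc in auto)
    have "det (mat_delete D j (n-1)) = [: det (map_mat (\<lambda>p. poly p 0) (mat_delete D j (n-1))) :]"
      by (subst cst) (rule cph.hom_det)
    hence cd: "det (mat_delete D j (n-1)) = [: poly (det (mat_delete D j (n-1))) 0 :]"
      by (simp only: evh.hom_det)
    show "D $$ (j, n-1) * cofactor D j (n-1) = smult ((-1)^(j + (n-1)) *
        poly (det (mat_delete D j (n-1))) 0) (monom 1 (q^j))"
      unfolding cofactor_def Dj by (subst cd) (simp add: neg1pow mult.commute)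
  qed
  finally show ?thesis unfolding D_def by (simp add: lin_sum)
qed

lemma lin_Lambda: assumes "length g \<ge> 1" shows "lin (Lambda_gr q g r)"
  unfolding Lambda_gr_def using assms by (intro lin_smult lin_sum lin_det_Dmat) auto

end


context ffq begin

definition valD :: "'a list \<Rightarrow> nat \<Rightarrow> 'a \<Rightarrow> nat \<Rightarrow> 'a" where
  "valD g i x c = (if c < i then g ! c else if Suc c < length g then g ! Suc c else x)"

lemma Dmat_dims[simp]: "dim_row (Dmat q (g::'a list) i) = length g" "dim_col (Dmat q g i) = length g"
  by (simp_all add: Dmat_alt)

definition Emat :: "'a list \<Rightarrow> nat \<Rightarrow> 'a \<Rightarrow> 'a mat" where
  "Emat g i x = mat (length g) (length g) (\<lambda>(j,c). (valD g i x c) ^ (q ^ j))"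

lemma poly_det_Dmat: assumes i: "i < length g"
  shows "poly (det (Dmat q g i)) x = det (Emat g i x)"
proof -
  have "map_mat (\<lambda>p. poly p x) (Dmat q g i) = Emat g i x"
  proof (rule eq_matI)
    fix j c assume "j < dim_row (Emat g i x)" "c < dim_col (Emat g i x)"
    hence jc: "j < length g" "c < length g" by (auto simp: Emat_def)
    show "map_mat (\<lambda>p. poly p x) (Dmat q g i) $$ (j, c) = Emat g i x $$ (j, c)"
      using jc i by (auto simp: Dmat_index Emat_def colsD_nth valD_def poly_power)
  qed (auto simp: Emat_def Dmat_alt)
  thus ?thesis by (metis evh.hom_det)
qed

lemma Emat_carrier: "Emat g i x \<in> carrier_mat (length g) (length g)" by (simp add: Emat_def)

lemma det_E_other: assumes i: "i < length g" and l: "l < length g" and il: "i \<noteq> l"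
  shows "det (Emat g i (g ! l)) = 0"
proof -
  define n where "n = length g"
  define c1 where "c1 = (if l < i then l else l - 1)"
  have c1: "c1 < n" "n - 1 < n" "c1 \<noteq> n - 1" using i l il by (auto simp: c1_def n_def)
  have v1: "valD g i (g ! l) c1 = g ! l" using i l il by (auto simp: valD_def c1_def)
  have v2: "valD g i (g ! l) (n - 1) = g ! l" using i l il by (auto simp: valD_def n_def)
  show ?thesis
  proof (rule det_identical_columns[OF Emat_carrier c1(3)])
    show "c1 < length g" "n - 1 < length g" using c1 by (auto simp: n_def)
    show "col (Emat g i (g ! l)) c1 = col (Emat g i (g ! l)) (n - 1)"
      using c1 v1 v2 by (simp add: Emat_def n_def)
  qed
qed

lemma det_E_same: assumes l: "l < length g"
  shows "det (Emat g l (g ! l)) = (-1)^(length g - 1 - l) * det (Mn q g)"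
proof -
  define n where "n = length g"
  define E where "E = Emat g l (g ! l)"
  define M where "M = Mn q g"
  have n1: "n - 1 < n" using l by (simp add: n_def)
  have Ec: "E \<in> carrier_mat n n" by (simp add: E_def n_def Emat_carrier)
  have Mc: "M \<in> carrier_mat n n" by (simp add: M_def n_def Mn_carrier)
  have ln: "l < n" using l by (simp add: n_def)
  have del: "mat_delete E j (n-1) = mat_delete M j l" if j: "j < n" for j
  proof (rule eq_matI)
    fix a b assume "a < dim_row (mat_delete M j l)" "b < dim_col (mat_delete M j l)"
    hence ab: "a < n - 1" "b < n - 1" using Mc by auto
    show "mat_delete E j (n-1) $$ (a, b) = mat_delete M j l $$ (a, b)"
      using ab Ec Mc ln by (auto simp: mat_delete_def E_def M_def Emat_def Mn_def valD_def n_def)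
  qed (use Ec Mc in auto)
  have "det E = (\<Sum>j<n. E $$ (j, n-1) * cofactor E j (n-1))"
    by (rule laplace_expansion_column[OF Ec n1])
  also have "\<dots> = (\<Sum>j<n. (-1)^(n-1-l) * (M $$ (j, l) * cofactor M j l))"
  proof (rule sum.cong[OF refl])
    fix j assume "j \<in> {..<n}"
    hence j: "j < n" by simp
    have sn: "Suc (n-1) = n" "\<not> n - 1 < l" using ln by auto
    have e1: "E $$ (j, n-1) = M $$ (j, l)"
      using j ln n1 sn by (simp add: E_def M_def Emat_def Mn_def valD_def n_def)
    have "j + (n-1) = (n-1-l) + (j+l)" using ln by simp
    hence "(-1::'a)^(j + (n-1)) = (-1)^(n-1-l) * (-1)^(j+l)"
      by (simp only: power_add)
    thus "E $$ (j, n-1) * cofactor E j (n-1) = (-1)^(n-1-l) * (M $$ (j, l) * cofactor M j l)"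
      unfolding cofactor_def e1 del[OF j] by simp
  qed
  also have "\<dots> = (-1)^(n-1-l) * det M"
    by (simp add: laplace_expansion_column[OF Mc ln] sum_distrib_left)
  finally show ?thesis by (simp add: E_def M_def n_def)
qed

lemma poly_Lambda: assumes ind: "indep g" and l: "l < length g"
  shows "poly (Lambda_gr q g r) (g ! l) = r ! l"
proof -
  define n where "n = length g"
  define d where "d = det (Mn q g)"
  have d0: "d \<noteq> 0" using det_Mn_nz[OF ind] by (simp add: d_def)
  have "poly (Lambda_gr q g r) (g ! l) =
      inverse d * (\<Sum>i<n. ((-1) ^ (n - 1 - i) * r ! i) * det (Emat g i (g ! l)))"
    by (simp add: Lambda_gr_def poly_sum d_def n_def poly_det_Dmat)
  also have "(\<Sum>i<n. ((-1) ^ (n - 1 - i) * r ! i) * det (Emat g i (g ! l)))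
      = (\<Sum>i<n. if i = l then ((-1) ^ (n - 1 - l) * r ! l) * ((-1)^(n - 1 - l) * d) else 0)"
  proof (rule sum.cong[OF refl])
    fix i assume "i \<in> {..<n}"
    hence i: "i < length g" by (simp add: n_def)
    show "((-1) ^ (n - 1 - i) * r ! i) * det (Emat g i (g ! l))
        = (if i = l then ((-1) ^ (n - 1 - l) * r ! l) * ((-1)^(n - 1 - l) * d) else 0)"
      using det_E_other[OF i l] det_E_same[OF l] by (auto simp: d_def n_def)
  qed
  also have "\<dots> = ((-1) ^ (n - 1 - l) * r ! l) * ((-1)^(n - 1 - l) * d)"
    using l by (simp add: sum.delta n_def)
  also have "\<dots> = r ! l * d * ((-1) ^ (n - 1 - l) * (-1) ^ (n - 1 - l))" by (simp add: algebra_simps)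
  also have "(-1::'a) ^ (n - 1 - l) * (-1) ^ (n - 1 - l) = 1" by (simp flip: power_add)
  finally show ?thesis using d0 by simp
qed

end


context ffq begin

lemma pcomp_X[simp]: "pcompose p (pCons 0 1) = p" using pcompose_idR[of p] by (simp add: one_pCons)

definition ev :: "'a list \<Rightarrow> 'a list \<Rightarrow> nat \<Rightarrow> 'a vec2 \<Rightarrow> 'a" where
  "ev g r i f = poly (fst f) (g ! i) + poly (snd f) (r ! i)"

definition lin2 :: "'a vec2 \<Rightarrow> bool" where "lin2 f \<longleftrightarrow> lin (fst f) \<and> lin (snd f)"

definition Mi :: "'a list \<Rightarrow> 'a list \<Rightarrow> nat \<Rightarrow> 'a vec2 set" where
  "Mi g r i = {f. lin2 f \<and> (\<forall>j<i. ev g r j f = 0)}"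

lemma interp_eq: assumes ind: "indep g" and lr: "length r = length g" and n1: "length g \<ge> 1"
  shows "interp_module q g r = Mi g r (length g)"
proof (intro Set.set_eqI iffI)
  fix x assume "x \<in> interp_module q g r"
  then obtain \<beta> \<gamma> where bg: "lin \<beta>" "lin \<gamma>"
    "x = vadd (vcomp \<beta> (Pi_g q g, 0)) (vcomp \<gamma> (- Lambda_gr q g r, [:0, 1:]))"
    by (auto simp: interp_module_def)
  have lL: "lin (Lambda_gr q g r)" using lin_Lambda n1 by simp
  have x: "x = (pcompose \<beta> (PI g) - pcompose \<gamma> (Lambda_gr q g r), \<gamma>)"
    using bg by (simp add: vadd_def vcomp_def pcomp_uminus)
  show "x \<in> Mi g r (length g)"
    unfolding Mi_def lin2_def ev_def
  proof (intro CollectI conjI allI impI)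
    show "lin (fst x)" "lin (snd x)" using x bg lin_Pi[OF ind] lL by auto
    fix j assume j: "j < length g"
    have "poly (PI g) (g ! j) = 0" using span_nth[OF j] poly_Pi_0_iff by blast
    thus "poly (fst x) (g ! j) + poly (snd x) (r ! j) = 0"
      using x bg poly_Lambda[OF ind j] by (simp add: poly_pcompose)
  qed
next
  fix f assume f: "f \<in> Mi g r (length g)"
  obtain f1 f2 where f12: "f = (f1, f2)" by fastforce
  have l1: "lin f1" and l2: "lin f2" and ev0: "\<And>j. j < length g \<Longrightarrow> poly f1 (g ! j) + poly f2 (r ! j) = 0"
    using f f12 by (auto simp: Mi_def lin2_def ev_def)
  have lL: "lin (Lambda_gr q g r)" using lin_Lambda n1 by simp
  define h where "h = f1 + pcompose f2 (Lambda_gr q g r)"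
  have lh: "lin h" using l1 l2 lL by (simp add: h_def)
  obtain \<beta> \<rho> where br: "lin \<beta>" "lin \<rho>" "h = pcompose \<beta> (PI g) + \<rho>" "\<rho> = 0 \<or> degree \<rho> < degree (PI g)"
    using rdiv[OF lin_Pi[OF ind] Pi_nz lh] by blast
  have rz: "poly \<rho> (g ! j) = 0" if j: "j < length g" for j
  proof -
    have "poly (PI g) (g ! j) = 0" using span_nth[OF j] poly_Pi_0_iff by blast
    hence "poly \<rho> (g ! j) = poly h (g ! j)" using br by (simp add: poly_pcompose)
    also have "\<dots> = 0" using ev0[OF j] poly_Lambda[OF ind j] by (simp add: h_def poly_pcompose)
    finally show ?thesis .
  qed
  have "\<rho> = 0"
  proof (cases "\<rho> = 0")
    case False
    hence "degree \<rho> < card (span g)" using br(4) degree_Pi by simp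
    thus ?thesis using poly_zero_many_roots[of "span g" \<rho>] lin_vanish_span[OF br(2) rz] by simp
  qed
  hence "f1 + pcompose f2 (Lambda_gr q g r) = pcompose \<beta> (PI g)" using br by (simp add: h_def)
  hence "f1 = pcompose \<beta> (PI g) - pcompose f2 (Lambda_gr q g r)" by (simp add: algebra_simps)
  hence "f = vadd (vcomp \<beta> (Pi_g q g, 0)) (vcomp f2 (- Lambda_gr q g r, [:0, 1:]))"
    using f12 br l2 by (simp add: vadd_def vcomp_def pcomp_uminus)
  thus "f \<in> interp_module q g r" unfolding interp_module_def using br(1) l2 by blast
qed

definition span2 :: "'a vec2 \<Rightarrow> 'a vec2 \<Rightarrow> 'a vec2 set" where
  "span2 R1 R2 = {vadd (vcomp a R1) (vcomp b R2) | a b. lin a \<and> lin b}"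

definition indep2 :: "'a vec2 \<Rightarrow> 'a vec2 \<Rightarrow> bool" where
  "indep2 R1 R2 \<longleftrightarrow> (\<forall>a b. lin a \<longrightarrow> lin b \<longrightarrow> vadd (vcomp a R1) (vcomp b R2) = (0, 0) \<longrightarrow> a = 0 \<and> b = 0)"

lemma vadd_comm: "vadd x y = vadd y x" by (simp add: vadd_def add.commute)
lemma vadd_0: "vadd x (0, 0) = x" by (simp add: vadd_def)

lemma vsum2: "vsum [x, y] = vadd x y" by (simp add: vsum_def vadd_0)

lemma span2_sym: "span2 R1 R2 = span2 R2 R1"
proof -
  have "\<And>R1 R2. span2 R1 R2 \<subseteq> span2 R2 R1"
  proof
    fix R1 R2 x assume "x \<in> span2 R1 R2"
    then obtain a b where "lin a" "lin b" "x = vadd (vcomp a R1) (vcomp b R2)" by (auto simp: span2_def)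
    hence "x = vadd (vcomp b R2) (vcomp a R1) \<and> lin b \<and> lin a" using vadd_comm[of "vcomp a R1" "vcomp b R2"] by simp
    thus "x \<in> span2 R2 R1" unfolding span2_def by blast
  qed
  thus ?thesis by blast
qed

lemma indep2_sym: "indep2 R1 R2 = indep2 R2 R1"
  unfolding indep2_def by (metis vadd_comm)

lemma two_lists: assumes "set bs = {x, y}" "distinct bs" "x \<noteq> y"
  shows "bs = [x, y] \<or> bs = [y, x]"
proof -
  have "length bs = 2" using distinct_card[OF assms(2)] assms by simp
  then obtain u v where uv: "bs = [u, v]"
    by (metis (no_types, lifting) One_nat_def Suc_1 length_0_conv length_Suc_conv)
  thus ?thesis using assms by (auto simp: doubleton_eq_iff)
qed

lemma is_basis2: assumes ne: "R1 \<noteq> R2" and M: "M = span2 R1 R2" and ind: "indep2 R1 R2"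
  shows "is_basis q M {R1, R2}"
  unfolding is_basis_def
proof (intro conjI allI impI)
  show "finite {R1, R2}" by simp
  show "M = {vsum (map (\<lambda>b. vcomp (a b) b) bs) | a bs. set bs = {R1, R2} \<and> distinct bs
              \<and> (\<forall>b\<in>{R1, R2}. is_linearized q (a b))}"
  proof (intro Set.set_eqI iffI)
    fix x assume "x \<in> M"
    then obtain a b where ab: "lin a" "lin b" "x = vadd (vcomp a R1) (vcomp b R2)"
      using M by (auto simp: span2_def)
    define A where "A = (\<lambda>v. if v = R1 then a else b)"
    have "x = vsum (map (\<lambda>v. vcomp (A v) v) [R1, R2])"
      using ab ne by (simp add: vsum_def A_def vadd_0)
    moreover have "\<forall>v\<in>{R1, R2}. lin (A v)" using ab by (simp add: A_def)
    ultimately show "x \<in> {vsum (map (\<lambda>b. vcomp (a b) b) bs) | a bs. set bs = {R1, R2} \<and> distinct bs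
              \<and> (\<forall>b\<in>{R1, R2}. is_linearized q (a b))}" using ne
      by (intro CollectI exI[of _ A] exI[of _ "[R1, R2]"]) auto
  next
    fix x assume "x \<in> {vsum (map (\<lambda>b. vcomp (a b) b) bs) | a bs. set bs = {R1, R2} \<and> distinct bs
              \<and> (\<forall>b\<in>{R1, R2}. is_linearized q (a b))}"
    then obtain A bs where Ab: "x = vsum (map (\<lambda>b. vcomp (A b) b) bs)" "set bs = {R1, R2}"
      "distinct bs" "lin (A R1)" "lin (A R2)" by auto
    have "x = vadd (vcomp (A R1) R1) (vcomp (A R2) R2)"
    proof (cases "bs = [R1, R2]")
      case True thus ?thesis using Ab(1) by (simp add: vsum2)
    next
      case False
      hence "bs = [R2, R1]" using two_lists[OF Ab(2,3) ne] by simp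
      thus ?thesis using Ab(1) vadd_comm[of "vcomp (A R2) R2"] by (simp add: vsum2)
    qed
    thus "x \<in> M" using M Ab by (auto simp: span2_def)
  qed
next
  fix A bs
  assume Ab: "set bs = {R1, R2} \<and> distinct bs \<and> (\<forall>b\<in>{R1, R2}. is_linearized q (A b))"
    and z: "vsum (map (\<lambda>b. vcomp (A b) b) bs) = (0, 0)"
  have "vadd (vcomp (A R1) R1) (vcomp (A R2) R2) = (0,0)"
  proof (cases "bs = [R1, R2]")
    case True thus ?thesis using z by (simp add: vsum2)
  next
    case False
    hence "bs = [R2, R1]" using two_lists[of bs R1 R2] Ab ne by blast
    thus ?thesis using z vadd_comm[of "vcomp (A R2) R2"] by (simp add: vsum2)
  qed
  hence "A R1 = 0 \<and> A R2 = 0" using ind Ab unfolding indep2_def by auto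
  thus "\<forall>b\<in>{R1, R2}. A b = 0" by simp
qed

end


context ffq begin

definition phi :: "'a \<Rightarrow> 'a poly" where "phi c = monom 1 q - monom (c^(q-1)) 1"

lemma lin_monom1[simp]: "lin (monom c 1)" using lin_monom[of c 0] by simp
lemma lin_monom1'[simp]: "lin (monom c (Suc 0))" using lin_monom[of c 0] by simp

lemma lin_phi[simp]: "lin (phi c)"
  unfolding phi_def using lin_monom[of 1 1] lin_monom1 by (intro lin_diff) auto

lemma degree_phi: "degree (phi c) = q"
proof -
  have dl: "degree (monom (c^(q-1)) 1) < degree (monom (1::'a) q)"
    by (rule le_less_trans[OF degree_monom_le]) (use q_gt1 in \<open>simp add: degree_monom_eq\<close>)
  thus ?thesis using deg_diff_left[OF dl] q_pos by (simp add: phi_def degree_monom_eq)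
qed

lemma phi_nz: "phi c \<noteq> 0"
proof
  assume "phi c = 0" hence "degree (phi c) = 0" by simp
  thus False using degree_phi q_ge2 by simp
qed

lemma qd_phi: "qdegn q (phi c) = 1"
  using lin_degree[OF lin_phi phi_nz, of c] degree_phi q_gt1
  by (metis power_inject_exp power_one_right)

lemma poly_phi: "poly (phi c) c = 0"
proof -
  have sq: "Suc (q-1) = q" using q_pos by simp
  have "c^(q-1) * c = c^q" using power_Suc2[of c "q-1"] sq by simp
  thus ?thesis by (simp add: phi_def poly_monom mult.commute)
qed

lemma pcomp_monom1: "pcompose (monom (c::'a) 1) p = smult c p" using pcompose_monom[of c 1 p] by simp
lemma pcomp_monom1'[simp]: "pcompose (monom (c::'a) (Suc 0)) p = smult c p" using pcompose_monom[of c 1 p] by simp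

lemma lin_small: assumes "lin \<rho>" "degree \<rho> < q" shows "\<rho> = monom (coeff \<rho> 1) 1"
proof (rule poly_eqI)
  fix n
  show "coeff \<rho> n = coeff (monom (coeff \<rho> 1) 1) n"
  proof (cases "n = 1")
    case False
    have "coeff \<rho> n = 0"
    proof (rule ccontr)
      assume nz: "coeff \<rho> n \<noteq> 0"
      then obtain j where j: "n = q^j" using assms(1) unfolding is_linearized_def by blast
      have "n \<le> degree \<rho>" using nz le_degree by blast
      hence "q^j < q^1" using assms(2) j by simp
      hence "j < 1" using power_strict_increasing_iff[OF q_gt1, of j 1] by blast
      hence "j = 0" by simp
      thus False using j False by simp
    qed
    thus ?thesis using False by simp
  qed simp
qed

lemma ev_vadd: "ev g r i (vadd u v) = ev g r i u + ev g r i v"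
  by (simp add: ev_def vadd_def)

lemma ev_vcomp: "lin h \<Longrightarrow> ev g r i (vcomp h R) = poly h (ev g r i R)"
  by (simp add: ev_def vcomp_def poly_pcompose poly_lin_add)

lemma lin2_vcomp[simp]: "lin h \<Longrightarrow> lin2 R \<Longrightarrow> lin2 (vcomp h R)"
  by (simp add: lin2_def vcomp_def)

lemma lin2_vadd[simp]: "lin2 u \<Longrightarrow> lin2 v \<Longrightarrow> lin2 (vadd u v)"
  by (simp add: lin2_def vadd_def)

lemma Mi_vcomp: "f \<in> Mi g r i \<Longrightarrow> lin h \<Longrightarrow> vcomp h f \<in> Mi g r i"
  by (simp add: Mi_def ev_vcomp)

lemma Mi_vadd: "f \<in> Mi g r i \<Longrightarrow> f' \<in> Mi g r i \<Longrightarrow> vadd f f' \<in> Mi g r i"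
  by (simp add: Mi_def ev_vadd)

lemma Mi_Suc: "Mi g r (Suc i) = {f \<in> Mi g r i. ev g r i f = 0}"
  by (auto simp: Mi_def less_Suc_eq)

lemma vcomp_X: "vcomp [:0,1:] R = R"
  by (simp add: vcomp_def pcompose_pCons pcompose_1)
lemma vcomp_X': "vcomp (pCons 0 1) R = R"
  by (simp add: vcomp_def pcompose_pCons pcompose_1)

lemma vcomp_0: "vcomp 0 R = (0, 0)" by (simp add: vcomp_def)

lemma span2_R1: "R1 \<in> span2 R1 R2"
proof -
  have "R1 = vadd (vcomp [:0,1:] R1) (vcomp 0 R2)" by (simp add: vcomp_X vcomp_X' vcomp_0 vadd_0)
  thus ?thesis unfolding span2_def using lin_X lin_0 by blast
qed

lemma span2_R2: "R2 \<in> span2 R1 R2"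
proof -
  have "R2 \<in> span2 R2 R1" by (rule span2_R1)
  thus ?thesis by (simp only: span2_sym)
qed

lemma comp_id1:
  assumes la': "lin a'" and lb: "lin b" and G: "G \<noteq> 0" and e: "w \<noteq> 0"
    and a: "a = pcompose a' (phi G) - pcompose b (monom (D / G) 1)"
  shows "pcompose a p + pcompose b s = pcompose a' (pcompose (phi G) p) +
     pcompose (pcompose b (monom (- inverse (w * G)) 1))
       (pcompose (monom (w * D) 1) p + pcompose (monom (- (w * G)) 1) s)"
proof -
  define b' where "b' = pcompose b (monom (- inverse (w * G)) 1)"
  have lb': "lin b'" using lb by (simp add: b'_def)
  have r0: "pcompose b' (pcompose (monom (w * D) 1) p + pcompose (monom (- (w * G)) 1) s)
      = pcompose b' (smult (w * D) p) + pcompose b' (smult (- (w * G)) s)"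
    by (simp only: pcomp_monom1 pcomp_add[OF lb'])
  have fs: "- inverse (w * G) * (w * D) = - (D / G)" using G e by (simp add: field_simps)
  have fs2: "- inverse (w * G) * - (w * G) = 1" using G e by (simp add: field_simps)
  have r1: "pcompose b' (smult (w * D) p) = - pcompose b (smult (D / G) p)"
  proof -
    have "pcompose b' (smult (w * D) p) = pcompose b (smult (- inverse (w * G) * (w * D)) p)"
      by (simp only: b'_def pcompose_assoc[symmetric] pcomp_monom1 smult_smult)
    also have "\<dots> = pcompose b (smult (- (D / G)) p)" by (simp only: fs)
    also have "\<dots> = - pcompose b (smult (D / G) p)"
      by (simp add: pcomp_uminus[OF lb, symmetric])
    finally show ?thesis .
  qed
  have r2: "pcompose b' (smult (- (w * G)) s) = pcompose b s"
  proof -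
    have "pcompose b' (smult (- (w * G)) s) = pcompose b (smult (- inverse (w * G) * - (w * G)) s)"
      by (simp only: b'_def pcompose_assoc[symmetric] pcomp_monom1 smult_smult)
    also have "\<dots> = pcompose b s" by (simp only: fs2 smult_1_left)
    finally show ?thesis .
  qed
  have r: "pcompose b' (pcompose (monom (w * D) 1) p + pcompose (monom (- (w * G)) 1) s)
      = - pcompose b (smult (D / G) p) + pcompose b s" using r0 r1 r2 by simp
  have "pcompose a p = pcompose a' (pcompose (phi G) p) - pcompose b (smult (D / G) p)"
    by (simp add: a pcompose_diff pcompose_assoc[symmetric] pcomp_monom1)
  thus ?thesis using r by (simp add: b'_def)
qed

lemma comp_id2:
  assumes lb: "lin b"
  shows "pcompose a (pcompose (phi G) p) +
     pcompose b (pcompose (monom (w * D) 1) p + pcompose (monom (- (w * G)) 1) s)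
   = pcompose (pcompose a (phi G) + pcompose b (monom (w * D) 1)) p
     + pcompose (pcompose b (monom (- (w * G)) 1)) s"
  by (simp only: pcomp_add[OF lb] pcompose_add pcompose_assoc add.assoc)

lemma step_core:
  assumes l1: "lin2 R1" and l2: "lin2 R2" and sp: "span2 R1 R2 = Mi g r i" and ind: "indep2 R1 R2"
    and G: "ev g r i R1 = G" and D: "ev g r i R2 = D" and G0: "G \<noteq> 0" and w0: "w \<noteq> 0"
  defines "U \<equiv> vcomp (phi G) R1"
    and "V \<equiv> vadd (vcomp (monom (w * D) 1) R1) (vcomp (monom (- (w * G)) 1) R2)"
  shows "lin2 U" "lin2 V" "span2 U V = Mi g r (Suc i)" "indep2 U V"
proof -
  show lU: "lin2 U" "lin2 V" using l1 l2 by (simp_all add: U_def V_def)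
  have R1M: "R1 \<in> Mi g r i" and R2M: "R2 \<in> Mi g r i" using sp span2_R1 span2_R2 by blast+
  have evU: "ev g r i U = 0" using G by (simp add: U_def ev_vcomp poly_phi)
  have evV: "ev g r i V = 0" using G D by (simp add: V_def ev_vcomp ev_vadd poly_monom)
  have UM: "U \<in> Mi g r i" unfolding U_def by (rule Mi_vcomp[OF R1M lin_phi])
  have VM: "V \<in> Mi g r i" unfolding V_def by (intro Mi_vadd Mi_vcomp R1M R2M lin_monom1)
  show "span2 U V = Mi g r (Suc i)"
  proof (intro Set.set_eqI iffI)
    fix x assume "x \<in> span2 U V"
    then obtain a b where ab: "lin a" "lin b" "x = vadd (vcomp a U) (vcomp b V)" by (auto simp: span2_def)
    have "x \<in> Mi g r i" using ab UM VM by (simp add: Mi_vadd Mi_vcomp)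
    moreover have "ev g r i x = 0" using ab evU evV by (simp add: ev_vadd ev_vcomp)
    ultimately show "x \<in> Mi g r (Suc i)" by (simp add: Mi_Suc)
  next
    fix f assume "f \<in> Mi g r (Suc i)"
    hence fM: "f \<in> Mi g r i" and ef: "ev g r i f = 0" by (auto simp: Mi_Suc)
    have "f \<in> span2 R1 R2" using fM sp by simp
    then obtain a b where ab: "lin a" "lin b" "f = vadd (vcomp a R1) (vcomp b R2)"
      unfolding span2_def by blast
    have e1: "poly a G + poly b D = 0" using ef ab G D by (simp add: ev_vadd ev_vcomp)
    define c where "c = a + pcompose b (monom (D / G) 1)"
    have lc: "lin c" using ab by (simp add: c_def)
    have pc: "poly c G = 0" using e1 G0 by (simp add: c_def poly_pcompose poly_monom)
    obtain a' \<rho> where ar: "lin a'" "lin \<rho>" "c = pcompose a' (phi G) + \<rho>" "\<rho> = 0 \<or> degree \<rho> < degree (phi G)"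
      using rdiv[OF lin_phi phi_nz lc] by blast
    have "\<rho> = 0"
    proof (cases "\<rho> = 0")
      case False
      hence "degree \<rho> < q" using ar(4) degree_phi by simp
      hence rh: "\<rho> = monom (coeff \<rho> 1) 1" using lin_small ar(2) by blast
      have "poly \<rho> G = 0" using pc ar(1,3) by (simp add: poly_pcompose poly_phi)
      hence "coeff \<rho> 1 * G = 0" by (subst (asm) rh) (simp add: poly_monom)
      hence "coeff \<rho> 1 = 0" using G0 by simp
      thus ?thesis by (subst rh) simp
    qed
    hence "a + pcompose b (monom (D / G) 1) = pcompose a' (phi G)" using ar(3) by (simp only: c_def add_0_right)
    hence aeq: "a = pcompose a' (phi G) - pcompose b (monom (D / G) 1)" by (simp only: eq_diff_eq)
    define b' where "b' = pcompose b (monom (- inverse (w * G)) 1)"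
    have "f = vadd (vcomp a' U) (vcomp b' V)"
      unfolding ab(3) U_def V_def b'_def vadd_def vcomp_def
      using comp_id1[OF ar(1) ab(2) G0 w0 aeq] by simp
    moreover have "lin b'" using ab by (simp add: b'_def)
    ultimately show "f \<in> span2 U V" using ar(1) unfolding span2_def by blast
  qed
  show "indep2 U V"
    unfolding indep2_def
  proof (intro allI impI)
    fix a b assume la: "lin a" and lb: "lin b" and z: "vadd (vcomp a U) (vcomp b V) = (0, 0)"
    define A where "A = pcompose a (phi G) + pcompose b (monom (w * D) 1)"
    define B where "B = pcompose b (monom (- (w * G)) 1)"
    have "vadd (vcomp A R1) (vcomp B R2) = vadd (vcomp a U) (vcomp b V)"
      unfolding A_def B_def U_def V_def vadd_def vcomp_def
      using comp_id2[OF lb] by simp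
    hence "vadd (vcomp A R1) (vcomp B R2) = (0, 0)" using z by simp
    moreover have "lin A" "lin B" using la lb by (simp_all add: A_def B_def)
    ultimately have AB: "A = 0" "B = 0" using ind unfolding indep2_def by blast+
    have "b = 0" using AB(2) pcompose_eq_0[of b "monom (- (w * G)) 1"] G0 w0
      by (simp add: B_def degree_monom_eq)
    moreover have "a = 0" using AB(1) \<open>b = 0\<close> pcompose_eq_0[of a "phi G"] degree_phi q_pos
      by (simp add: A_def)
    ultimately show "a = 0 \<and> b = 0" by simp
  qed
qed

end


context ffq begin

abbreviation qd :: "'a poly \<Rightarrow> nat" where "qd p \<equiv> qdegn q p"

definition P1 :: "nat \<Rightarrow> 'a vec2 \<Rightarrow> bool" where
  "P1 kk R \<longleftrightarrow> fst R \<noteq> 0 \<and> (snd R = 0 \<or> qd (snd R) + kk < qd (fst R))"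

definition P2 :: "nat \<Rightarrow> 'a vec2 \<Rightarrow> bool" where
  "P2 kk R \<longleftrightarrow> snd R \<noteq> 0 \<and> (fst R = 0 \<or> qd (fst R) \<le> qd (snd R) + kk)"

lemma qdeg_nz: "p \<noteq> 0 \<Longrightarrow> qdeg q p = ereal (real (qd p))" by (simp add: qdeg_def)

lemma lpos_eq: "lpos q k (p, s) = (if qdeg q p \<le> qdeg q s + ereal (real k - 1) then 2 else 1)"
proof -
  have "(2::nat) \<noteq> 1" by simp
  thus ?thesis unfolding lpos_def wdeg_def by (simp only: if_True if_False fst_conv snd_conv simp_thms)
qed

lemma qdeg_w: assumes k: "k \<ge> 1" and s: "s \<noteq> 0"
  shows "qdeg q s + ereal (real k - 1) = ereal (real (qd s + (k - 1)))"
proof -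
  have r: "ereal (real k - 1) = ereal (real (k - 1))" using k by (simp add: of_nat_diff)
  have e: "qdeg q s = ereal (real (qd s))" using s by (simp add: qdeg_def)
  show ?thesis by (simp only: r e plus_ereal.simps(1) of_nat_add)
qed

lemma lpos_1: assumes k: "k \<ge> 1" and P: "P1 (k - 1) R" shows "lpos q k R = 1"
proof -
  obtain p s where R: "R = (p, s)" by fastforce
  have p: "p \<noteq> 0" and s: "s = 0 \<or> qd s + (k - 1) < qd p" using P R by (auto simp: P1_def)
  have e1: "qdeg q p = ereal (real (qd p))" using p by (simp add: qdeg_def)
  have "\<not> qdeg q p \<le> qdeg q s + ereal (real k - 1)"
  proof (cases "s = 0")
    case True thus ?thesis unfolding e1 by (simp add: qdeg_def)
  next
    case False
    hence "qd s + (k - 1) < qd p" using s by simp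
    thus ?thesis unfolding e1 qdeg_w[OF k False] ereal_less_eq(3) of_nat_le_iff by simp
  qed
  thus ?thesis unfolding R lpos_eq by simp
qed

lemma lpos_2: assumes k: "k \<ge> 1" and P: "P2 (k - 1) R" shows "lpos q k R = 2"
proof -
  obtain p s where R: "R = (p, s)" by fastforce
  have s: "s \<noteq> 0" and p: "p = 0 \<or> qd p \<le> qd s + (k - 1)" using P R by (auto simp: P2_def)
  have "qdeg q p \<le> qdeg q s + ereal (real k - 1)"
  proof (cases "p = 0")
    case True thus ?thesis by (simp add: qdeg_def)
  next
    case False
    have e1: "qdeg q p = ereal (real (qd p))" using False by (simp add: qdeg_def)
    have "qd p \<le> qd s + (k - 1)" using p False by simp
    thus ?thesis unfolding e1 qdeg_w[OF k s] ereal_less_eq(3) of_nat_le_iff .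
  qed
  thus ?thesis unfolding R lpos_eq by simp
qed

lemma qdeg_cond: assumes k: "k \<ge> 1" and p: "p \<noteq> 0" and s: "s \<noteq> 0"
  shows "(qdeg q p \<le> qdeg q (- s) + ereal (real k - 1)) \<longleftrightarrow> qd p \<le> qd s + (k - 1)"
proof -
  have ms: "- s \<noteq> 0" using s by simp
  have e1: "qdeg q p = ereal (real (qd p))" using p by (simp add: qdeg_def)
  show ?thesis unfolding e1 qdeg_w[OF k ms] ereal_less_eq(3) of_nat_le_iff qd_uminus ..
qed

definition dle :: "'a poly \<Rightarrow> nat \<Rightarrow> bool" where "dle p N \<longleftrightarrow> p = 0 \<or> qd p \<le> N"

lemma dle_comb: assumes "lin p" "lin s" "dle p N" "dle s N"
  shows "dle (smult x p + smult y s) N"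
proof -
  have sp: "dle (smult x p) N" "dle (smult y s) N" using assms(3,4) by (auto simp: dle_def qd_smult)
  have lsp: "lin (smult x p)" "lin (smult y s)" using assms by auto
  show ?thesis
  proof (cases "smult x p = 0 \<or> smult y s = 0 \<or> smult x p + smult y s = 0")
    case True thus ?thesis using sp by (auto simp: dle_def)
  next
    case False
    hence "qd (smult x p + smult y s) \<le> max (qd (smult x p)) (qd (smult y s))"
      using qd_add_le[OF lsp] by blast
    thus ?thesis using sp False by (auto simp: dle_def)
  qed
qed

lemma comb_eq: assumes "lin p" "lin s" "s \<noteq> 0" "y \<noteq> 0" "p = 0 \<or> qd p < qd s"
  shows "smult x p + smult y s \<noteq> 0 \<and> qd (smult x p + smult y s) = qd s"
proof -
  have "smult y s + smult x p \<noteq> 0 \<and> qd (smult y s + smult x p) = qd (smult y s)"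
    using assms by (intro qd_add_eq) (auto simp: qd_smult)
  thus ?thesis using assms by (simp add: qd_smult add.commute)
qed

lemma phi_comp: assumes "lin p" "p \<noteq> 0"
  shows "pcompose (phi c) p \<noteq> 0 \<and> qd (pcompose (phi c) p) = qd p + 1"
  using qd_comp[OF lin_phi assms(1) phi_nz assms(2)] qd_phi by simp

lemma branch1_P:
  assumes l: "lin a1" "lin b1" "lin a2" "lin b2"
    and P1: "P1 kk (a1, b1)" and P2: "P2 kk (a2, b2)" and G: "G \<noteq> 0"
    and C: "qd a1 \<le> qd b2 + kk \<or> D = 0"
  shows "P1 kk (pcompose (phi G) a1, pcompose (phi G) b1)"
    "P2 kk (smult D a1 + smult (- G) a2, smult D b1 + smult (- G) b2)"
proof -
  have a1: "a1 \<noteq> 0" and b1: "b1 = 0 \<or> qd b1 + kk < qd a1" using P1 by (auto simp: P1_def)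
  have b2: "b2 \<noteq> 0" and a2: "a2 = 0 \<or> qd a2 \<le> qd b2 + kk" using P2 by (auto simp: P2_def)
  show "P1 kk (pcompose (phi G) a1, pcompose (phi G) b1)"
  proof (cases "b1 = 0")
    case True thus ?thesis using phi_comp[OF l(1) a1, of G] by (simp add: P1_def)
  next
    case False
    thus ?thesis using phi_comp[OF l(1) a1, of G] phi_comp[OF l(2) False, of G] b1 by (simp add: P1_def)
  qed
  show "P2 kk (smult D a1 + smult (- G) a2, smult D b1 + smult (- G) b2)"
  proof (cases "D = 0")
    case True
    thus ?thesis using b2 a2 G by (auto simp: P2_def qd_smult qd_uminus)
  next
    case False
    hence c: "qd a1 \<le> qd b2 + kk" using C by simp
    have "b1 = 0 \<or> qd b1 < qd b2" using b1 c by auto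
    hence sb: "smult D b1 + smult (- G) b2 \<noteq> 0 \<and> qd (smult D b1 + smult (- G) b2) = qd b2"
      using comb_eq[OF l(2) l(4) b2, of "- G" D] G by (meson neg_equal_0_iff_equal)
    have "dle a1 (qd b2 + kk)" "dle a2 (qd b2 + kk)" using c a2 by (auto simp: dle_def)
    hence "dle (smult D a1 + smult (- G) a2) (qd b2 + kk)" using dle_comb l by blast
    hence "smult D a1 + smult (- G) a2 = 0 \<or> qd (smult D a1 + smult (- G) a2) \<le> qd b2 + kk"
      by (simp add: dle_def)
    thus ?thesis using sb unfolding P2_def fst_conv snd_conv by simp
  qed
qed

lemma branch2_P:
  assumes l: "lin a1" "lin b1" "lin a2" "lin b2"
    and P1: "P1 kk (a1, b1)" and P2: "P2 kk (a2, b2)" and D: "D \<noteq> 0"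
    and C: "G = 0 \<or> qd b2 + kk < qd a1"
  shows "P1 kk (smult D a1 + smult (- G) a2, smult D b1 + smult (- G) b2)"
    "P2 kk (pcompose (phi D) a2, pcompose (phi D) b2)"
proof -
  have a1: "a1 \<noteq> 0" and b1: "b1 = 0 \<or> qd b1 + kk < qd a1" using P1 by (auto simp: P1_def)
  have b2: "b2 \<noteq> 0" and a2: "a2 = 0 \<or> qd a2 \<le> qd b2 + kk" using P2 by (auto simp: P2_def)
  show "P2 kk (pcompose (phi D) a2, pcompose (phi D) b2)"
  proof (cases "a2 = 0")
    case True thus ?thesis using phi_comp[OF l(4) b2, of D] by (simp add: P2_def)
  next
    case False
    thus ?thesis using phi_comp[OF l(4) b2, of D] phi_comp[OF l(3) False, of D] a2 by (simp add: P2_def)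
  qed
  show "P1 kk (smult D a1 + smult (- G) a2, smult D b1 + smult (- G) b2)"
  proof (cases "G = 0")
    case True
    thus ?thesis using a1 b1 D by (auto simp: P1_def qd_smult qd_uminus)
  next
    case False
    hence c: "qd b2 + kk < qd a1" using C by simp
    have "a2 = 0 \<or> qd a2 < qd a1" using a2 c by auto
    hence sa0: "smult (- G) a2 + smult D a1 \<noteq> 0 \<and> qd (smult (- G) a2 + smult D a1) = qd a1"
      using comb_eq[OF l(3) l(1) a1 D] by blast
    have cm: "smult (- G) a2 + smult D a1 = smult D a1 + smult (- G) a2" by (rule add.commute)
    have sa: "smult D a1 + smult (- G) a2 \<noteq> 0 \<and> qd (smult D a1 + smult (- G) a2) = qd a1"
      using sa0 unfolding cm .
    have "dle b1 (qd a1 - kk - 1)" "dle b2 (qd a1 - kk - 1)" using c b1 by (auto simp: dle_def)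
    hence "dle (smult D b1 + smult (- G) b2) (qd a1 - kk - 1)" using dle_comb l by blast
    hence "smult D b1 + smult (- G) b2 = 0 \<or> qd (smult D b1 + smult (- G) b2) + kk < qd a1"
      using c by (auto simp: dle_def)
    thus ?thesis using sa unfolding P1_def fst_conv snd_conv by simp
  qed
qed

end


context ffq begin

definition INV :: "'a list \<Rightarrow> 'a list \<Rightarrow> nat \<Rightarrow> nat \<Rightarrow> 'a mat2 \<Rightarrow> bool" where
  "INV g r kk i B \<longleftrightarrow> lin2 (row1 B) \<and> lin2 (row2 B) \<and> span2 (row1 B) (row2 B) = Mi g r i
     \<and> indep2 (row1 B) (row2 B) \<and> P1 kk (row1 B) \<and> P2 kk (row2 B)"

lemma row1_mcomp: "row1 (mcomp (m11, m12, m21, m22) B) = vadd (vcomp m11 (row1 B)) (vcomp m12 (row2 B))"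
  by (cases B) (simp add: mcomp_def row1_def row2_def vadd_def vcomp_def)

lemma row2_mcomp: "row2 (mcomp (m11, m12, m21, m22) B) = vadd (vcomp m21 (row1 B)) (vcomp m22 (row2 B))"
  by (cases B) (simp add: mcomp_def row1_def row2_def vadd_def vcomp_def)

lemma vadd_0_left: "vadd (0, 0) x = x" by (simp add: vadd_def)

lemma not_both_zero: assumes ind: "indep g" and i: "i < length g" and sp: "span2 R1 R2 = Mi g r i"
  shows "ev g r i R1 \<noteq> 0 \<or> ev g r i R2 \<noteq> 0"
proof (rule ccontr)
  assume "\<not> (ev g r i R1 \<noteq> 0 \<or> ev g r i R2 \<noteq> 0)"
  hence z: "ev g r i R1 = 0" "ev g r i R2 = 0" by auto
  define t where "t = take i g"
  have tg: "take (Suc i) g = t @ [g ! i]" using i by (simp add: t_def take_Suc_conv_app_nth)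
  have tt: "take (Suc i) g @ drop (Suc i) g = g" by simp
  have "indep (take (Suc i) g)" using indep_append[of "take (Suc i) g" "drop (Suc i) g", unfolded tt] ind by blast
  hence indt: "indep (t @ [g ! i])" using tg by simp
  have it: "indep t" and ni: "g ! i \<notin> span t" using indep_snoc[OF indt] by auto
  define f where "f = (PI t, 0::'a poly)"
  have "f \<in> Mi g r i"
    unfolding Mi_def lin2_def ev_def f_def
  proof (intro CollectI conjI allI impI)
    show "lin (fst (PI t, 0::'a poly))" "lin (snd (PI t, 0::'a poly))" using lin_Pi[OF it] by auto
    fix j assume j: "j < i"
    have "g ! j = t ! j" using j i by (simp add: t_def)
    moreover have "j < length t" using j i by (simp add: t_def)
    ultimately have "g ! j \<in> span t" using span_nth by simp
    thus "poly (fst (PI t, 0::'a poly)) (g ! j) + poly (snd (PI t, 0::'a poly)) (r ! j) = 0"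
      by (simp add: poly_Pi_0_iff)
  qed
  hence "f \<in> span2 R1 R2" using sp by simp
  then obtain a b where ab: "lin a" "lin b" "f = vadd (vcomp a R1) (vcomp b R2)" by (auto simp: span2_def)
  have "ev g r i f = 0" using ab z by (simp add: ev_vadd ev_vcomp)
  moreover have "ev g r i f \<noteq> 0" using ni by (simp add: f_def ev_def poly_Pi_0_iff)
  ultimately show False by simp
qed

lemma vcomp_mmonom: "vcomp (- monom c 1) R = vcomp (monom (- c) 1) R"
  by (simp add: minus_monom)

lemma vcomp_mmonom': "vcomp (- monom c (Suc 0)) R = vcomp (monom (- c) (Suc 0)) R"
  by (simp add: minus_monom)

lemma INV_step:
  assumes k: "k \<ge> 1" and ind: "indep g" and i: "i < length g" and I: "INV g r (k - 1) i B"
  shows "INV g r (k - 1) (Suc i) (alg3_step q k (g ! i, r ! i) B)"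
proof -
  obtain b11 b12 b21 b22 where B: "B = (b11, b12, b21, b22)" by (cases B) auto
  define R1 where "R1 = (b11, b12)"
  define R2 where "R2 = (b21, b22)"
  have rB: "row1 B = R1" "row2 B = R2" by (simp_all add: B R1_def R2_def row1_def row2_def)
  note I' = I[unfolded INV_def rB]
  have l1: "lin b11" "lin b12" and l2: "lin b21" "lin b22" using I' by (auto simp: lin2_def R1_def R2_def)
  have P1: "P1 (k - 1) (b11, b12)" and P2: "P2 (k - 1) (b21, b22)" using I' by (auto simp: R1_def R2_def)
  have b11: "b11 \<noteq> 0" using P1 by (simp add: P1_def)
  have b22: "b22 \<noteq> 0" using P2 by (simp add: P2_def)
  define G where "G = ev g r i R1"
  define D where "D = ev g r i R2"
  have sp0: "span2 R1 R2 = Mi g r i" using I' by blast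
  have nbz: "G \<noteq> 0 \<or> D \<noteq> 0" using not_both_zero[OF ind i sp0] by (simp add: G_def D_def)
  have Gd: "poly b11 (g ! i) - poly (- b12) (r ! i) = G" by (simp add: G_def ev_def R1_def)
  have Dd: "poly b21 (g ! i) - poly (- b22) (r ! i) = D" by (simp add: D_def ev_def R2_def)
  define C where "C = ((qdeg q b11 \<le> qdeg q (- b22) + ereal (real k - 1) \<and> G \<noteq> 0) \<or> D = 0)"
  have step: "alg3_step q k (g ! i, r ! i) B =
     (if C then mcomp (monom 1 q - monom (G ^ (q - 1)) 1, 0, monom D 1, - monom G 1) B
      else mcomp (monom D 1, - monom G 1, 0, monom 1 q - monom (D ^ (q - 1)) 1) B)"
    unfolding B by (simp only: alg3_step_def prod.case Let_def Gd Dd C_def)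
  have Cn: "C \<longleftrightarrow> ((qd b11 \<le> qd b22 + (k - 1) \<and> G \<noteq> 0) \<or> D = 0)"
    unfolding C_def qdeg_cond[OF k b11 b22] ..
  have sp: "span2 R1 R2 = Mi g r i" and id: "indep2 R1 R2" and lR: "lin2 R1" "lin2 R2"
    using I' by auto
  show ?thesis
  proof (cases C)
    case True
    hence G0: "G \<noteq> 0" using Cn nbz by auto
    have C': "qd b11 \<le> qd b22 + (k - 1) \<or> D = 0" using True Cn by auto
    note sc = step_core[OF lR sp id G_def[symmetric] D_def[symmetric] G0, of 1]
    define B' where "B' = alg3_step q k (g ! i, r ! i) B"
    have r1: "row1 B' = vcomp (phi G) R1"
      using True by (simp add: B'_def step row1_mcomp rB phi_def vcomp_0 vadd_0)
    have r2: "row2 B' = vadd (vcomp (monom (1 * D) 1) R1) (vcomp (monom (- (1 * G)) 1) R2)"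
      using True by (simp add: B'_def step row2_mcomp rB vcomp_mmonom vcomp_mmonom')
    have r1': "row1 B' = (pcompose (phi G) b11, pcompose (phi G) b12)"
      unfolding r1 by (simp add: vcomp_def R1_def)
    have r2': "row2 B' = (smult D b11 + smult (- G) b21, smult D b12 + smult (- G) b22)"
      unfolding r2 by (simp add: vcomp_def vadd_def R1_def R2_def pcomp_monom1)
    have PP: "P1 (k - 1) (row1 B')" "P2 (k - 1) (row2 B')"
      unfolding r1' r2' using branch1_P[OF l1 l2 P1 P2 G0 C'] by auto
    show ?thesis unfolding INV_def B'_def[symmetric] r1 r2 using sc PP[unfolded r1 r2] by simp
  next
    case False
    hence D0: "D \<noteq> 0" and C': "G = 0 \<or> qd b22 + (k - 1) < qd b11" using Cn by auto
    have sp': "span2 R2 R1 = Mi g r i" using sp span2_sym by metis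
    have id': "indep2 R2 R1" using id indep2_sym by metis
    have m1: "(-1::'a) \<noteq> 0" by simp
    note sc = step_core[OF lR(2) lR(1) sp' id' D_def[symmetric] G_def[symmetric] D0 m1]
    define B' where "B' = alg3_step q k (g ! i, r ! i) B"
    have r1: "row1 B' = vadd (vcomp (monom (- 1 * G) 1) R2) (vcomp (monom (- (- 1 * D)) 1) R1)"
      using False by (simp add: B'_def step row1_mcomp rB vcomp_mmonom vcomp_mmonom' vadd_comm)
    have r2: "row2 B' = vcomp (phi D) R2"
      using False by (simp add: B'_def step row2_mcomp rB phi_def vcomp_0 vadd_0_left)
    have r1': "row1 B' = (smult D b11 + smult (- G) b21, smult D b12 + smult (- G) b22)"
      unfolding r1 by (simp add: vcomp_def vadd_def R1_def R2_def pcomp_monom1 add.commute)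
    have r2': "row2 B' = (pcompose (phi D) b21, pcompose (phi D) b22)"
      unfolding r2 by (simp add: vcomp_def R2_def)
    have PP: "P1 (k - 1) (row1 B')" "P2 (k - 1) (row2 B')"
      unfolding r1' r2' using branch2_P[OF l1 l2 P1 P2 D0 C'] by auto
    have "span2 (row1 B') (row2 B') = Mi g r (Suc i)" "indep2 (row1 B') (row2 B')"
      "lin2 (row1 B')" "lin2 (row2 B')"
      unfolding r1 r2 using sc span2_sym indep2_sym by metis+
    thus ?thesis unfolding INV_def B'_def[symmetric] using PP by simp
  qed
qed

end


lemma CHAR_eq_p:
  assumes "prime p" "e > 0" "q = p ^ e" "m \<ge> 1" "card (UNIV :: 'a::{field,finite} set) = q ^ m"
  shows "CHAR('a) = p"
proof -
  have cp: "prime CHAR('a)" by (rule prime_CHAR_semidom) (simp add: finite_imp_CHAR_pos)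
  have "CHAR('a) dvd p ^ (e * m)" using CHAR_dvd_CARD[where 'a='a] assms by (simp add: power_mult)
  hence "CHAR('a) dvd p" using cp prime_dvd_power by blast
  thus ?thesis using assms cp by (metis primes_dvd_imp_eq)
qed

context ffq begin

lemma lin_X'[simp]: "lin (pCons 0 1)" unfolding one_pCons by (rule lin_X)

definition B0 :: "'a mat2" where "B0 = ([:0, 1:], 0, 0, [:0, 1:])"

lemma INV_0: "INV g r kk 0 B0"
proof -
  have r1: "row1 B0 = ([:0,1:], 0)" and r2: "row2 B0 = (0, [:0,1:])" by (simp_all add: B0_def row1_def row2_def)
  have sp: "span2 ([:0,1:], 0) (0, [:0,1:]) = Mi g r 0"
  proof (intro Set.set_eqI iffI)
    fix x assume "x \<in> span2 ([:0,1:], 0) (0, [:0,1:])"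
    then obtain a b where "lin a" "lin b" "x = vadd (vcomp a ([:0,1:], 0)) (vcomp b (0, [:0,1:]))"
      by (auto simp: span2_def)
    thus "x \<in> Mi g r 0" by (simp add: Mi_def lin2_def vadd_def vcomp_def)
  next
    fix x assume "x \<in> Mi g r 0"
    hence l: "lin (fst x)" "lin (snd x)" by (auto simp: Mi_def lin2_def)
    have "x = vadd (vcomp (fst x) ([:0,1:], 0)) (vcomp (snd x) (0, [:0,1:]))"
      using l by (simp add: vadd_def vcomp_def)
    thus "x \<in> span2 ([:0,1:], 0) (0, [:0,1:])" using l unfolding span2_def by blast
  qed
  have id: "indep2 ([:0,1:], 0) (0, [:0,1:])"
    unfolding indep2_def by (simp add: vadd_def vcomp_def)
  show ?thesis unfolding INV_def r1 r2 using sp id by (simp add: lin2_def P1_def P2_def)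
qed

lemma INV_loop:
  assumes k: "k \<ge> 1" and ind: "indep g" and lr: "length r = length g"
  shows "INV g r (k - 1) i B \<Longrightarrow> zs = drop i (zip g r) \<Longrightarrow> i \<le> length g \<Longrightarrow> INV g r (k - 1) (length g) (alg3_loop q k zs B)"
proof (induction zs arbitrary: i B)
  case Nil
  hence "i \<ge> length g" using lr by simp
  moreover have "i \<le> length g" using Nil by simp
  thus ?case using Nil \<open>i \<ge> length g\<close> by (simp add: le_antisym)
next
  case (Cons z zs)
  have i: "i < length g"
  proof (rule ccontr)
    assume "\<not> i < length g"
    hence "drop i (zip g r) = []" using lr by simp
    thus False using Cons.prems by simp
  qed
  have "drop i (zip g r) = (zip g r) ! i # drop (Suc i) (zip g r)"
    using Cons_nth_drop_Suc[of i "zip g r"] i lr by simp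
  hence z: "z = (g ! i, r ! i)" and zs: "zs = drop (Suc i) (zip g r)"
    using Cons.prems(2) i lr by auto
  have "INV g r (k - 1) (Suc i) (alg3_step q k (g ! i, r ! i) B)"
    by (rule INV_step[OF k ind i Cons.prems(1)])
  from Cons.IH[OF this zs] i show ?case by (simp add: z)
qed

lemma pcomp_monom_0: "pcompose (monom (1::'a) (q ^ a)) 0 = 0"
  using q_pos by (simp add: pcompose_0')

lemma not_red1:
  assumes f1: "lpos q k f = 1" and lf: "lin (fst f)" and nf: "fst f \<noteq> 0"
    and h2: "lpos q k h = 2"
  shows "\<not> reducible q k f {h}"
proof
  assume "reducible q k f {h}"
  then obtain ts :: "('a vec2 \<times> 'a \<times> nat) list" where
    ts: "\<forall>(h', b, a) \<in> set ts. h' \<in> {h} \<and> lm q k f = vcomp (monom 1 (q ^ a)) (lm q k h')"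
        "lt q k f = vsum (map (\<lambda>(h', b, a). vcomp (monom b (q ^ a)) (lt q k h')) ts)"
    unfolding reducible_def by blast
  have lmf: "lm q k f = (monom 1 (q ^ qdegn q (fst f)), 0)" using f1 by (simp add: lm_def comp_at_def unit_vec_def)
  have lmh: "fst (lm q k h) = 0" using h2 by (simp add: lm_def comp_at_def unit_vec_def)
  show False
  proof (cases ts)
    case Nil
    hence "lt q k f = (0, 0)" using ts(2) by (simp add: vsum_def)
    moreover have "fst (lt q k f) \<noteq> 0" using f1 lin_lead[OF lf nf] by (simp add: lt_def comp_at_def unit_vec_def Let_def)
    ultimately show False by simp
  next
    case (Cons t ts')
    obtain h' b a where t: "t = (h', b, a)" by (cases t) auto
    have "h' = h" "lm q k f = vcomp (monom 1 (q ^ a)) (lm q k h')" using ts(1) Cons t by auto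
    hence "fst (lm q k f) = pcompose (monom 1 (q ^ a)) 0" using lmh by (simp add: vcomp_def)
    hence "monom (1::'a) (q ^ qdegn q (fst f)) = 0" using lmf pcomp_monom_0 by simp
    thus False by simp
  qed
qed

lemma not_red2:
  assumes f2: "lpos q k f = 2" and lf: "lin (snd f)" and nf: "snd f \<noteq> 0"
    and h1: "lpos q k h = 1"
  shows "\<not> reducible q k f {h}"
proof
  assume "reducible q k f {h}"
  then obtain ts :: "('a vec2 \<times> 'a \<times> nat) list" where
    ts: "\<forall>(h', b, a) \<in> set ts. h' \<in> {h} \<and> lm q k f = vcomp (monom 1 (q ^ a)) (lm q k h')"
        "lt q k f = vsum (map (\<lambda>(h', b, a). vcomp (monom b (q ^ a)) (lt q k h')) ts)"
    unfolding reducible_def by blast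
  have lmf: "lm q k f = (0, monom 1 (q ^ qdegn q (snd f)))" using f2 by (simp add: lm_def comp_at_def unit_vec_def)
  have lmh: "snd (lm q k h) = 0" using h1 by (simp add: lm_def comp_at_def unit_vec_def)
  show False
  proof (cases ts)
    case Nil
    hence "lt q k f = (0, 0)" using ts(2) by (simp add: vsum_def)
    moreover have "snd (lt q k f) \<noteq> 0" using f2 lin_lead[OF lf nf] by (simp add: lt_def comp_at_def unit_vec_def Let_def)
    ultimately show False by simp
  next
    case (Cons t ts')
    obtain h' b a where t: "t = (h', b, a)" by (cases t) auto
    have "h' = h" "lm q k f = vcomp (monom 1 (q ^ a)) (lm q k h')" using ts(1) Cons t by auto
    hence "snd (lm q k f) = pcompose (monom 1 (q ^ a)) 0" using lmh by (simp add: vcomp_def)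
    hence "monom (1::'a) (q ^ qdegn q (snd f)) = 0" using lmf pcomp_monom_0 by simp
    thus False by simp
  qed
qed

lemma main:
  assumes k: "1 \<le> k" "k \<le> length g" and lr: "length r = length g" and ind: "indep g"
  shows "minimal_basis q k (interp_module q g r) {row1 (alg3 q k g r), row2 (alg3 q k g r)}
         \<and> lpos q k (row1 (alg3 q k g r)) = 1 \<and> lpos q k (row2 (alg3 q k g r)) = 2"
proof -
  define R1 where "R1 = row1 (alg3 q k g r)"
  define R2 where "R2 = row2 (alg3 q k g r)"
  have "INV g r (k - 1) (length g) (alg3 q k g r)"
    unfolding alg3_def using INV_loop[OF k(1) ind lr INV_0[unfolded B0_def]] by simp
  hence I: "lin2 R1" "lin2 R2" "span2 R1 R2 = Mi g r (length g)" "indep2 R1 R2"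
    "P1 (k - 1) R1" "P2 (k - 1) R2" unfolding INV_def R1_def R2_def by auto
  have p1: "lpos q k R1 = 1" by (rule lpos_1[OF k(1) I(5)])
  have p2: "lpos q k R2 = 2" by (rule lpos_2[OF k(1) I(6)])
  have ne: "R1 \<noteq> R2" using p1 p2 by auto
  have n1: "length g \<ge> 1" using k by simp
  have M: "interp_module q g r = span2 R1 R2" using interp_eq[OF ind lr n1] I(3) by simp
  have f1: "fst R1 \<noteq> 0" using I(5) by (simp add: P1_def)
  have f2: "snd R2 \<noteq> 0" using I(6) by (simp add: P2_def)
  have lf1: "lin (fst R1)" and lf2: "lin (snd R2)" using I(1,2) by (auto simp: lin2_def)
  have "minimal_basis q k (interp_module q g r) {R1, R2}"
    unfolding minimal_basis_def
  proof (intro conjI ballI)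
    show "is_basis q (interp_module q g r) {R1, R2}" by (rule is_basis2[OF ne M I(4)])
    show "(0, 0) \<notin> {R1, R2}" using f1 f2 by auto
    fix b assume "b \<in> {R1, R2}"
    thus "minimal_wrt q k b ({R1, R2} - {b})"
    proof
      assume b: "b = R1"
      have "{R1, R2} - {b} = {R2}" using b ne by auto
      thus ?thesis using not_red1[OF p1 lf1 f1 p2] b by (simp add: minimal_wrt_def)
    next
      assume "b \<in> {R2}"
      hence b: "b = R2" by simp
      have "{R1, R2} - {b} = {R1}" using b ne by auto
      thus ?thesis using not_red2[OF p2 lf2 f2 p1] b by (simp add: minimal_wrt_def)
    qed
  qed
  thus ?thesis using p1 p2 by (simp add: R1_def R2_def)
qed

end

theorem theorem28:
  fixes q m n k :: nat and g r :: "'a::{field, finite} list"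
  assumes "\<exists>p e. prime p \<and> e > 0 \<and> q = p ^ e"
    and "m \<ge> 1"
    and "card (UNIV :: 'a set) = q ^ m"
    and "1 \<le> k" and "k \<le> n"
    and "length g = n" and "length r = n"
    and "Fq_lin_indep q g"
  shows "minimal_basis q k (interp_module q g r) {row1 (alg3 q k g r), row2 (alg3 q k g r)}
         \<and> lpos q k (row1 (alg3 q k g r)) = 1 \<and> lpos q k (row2 (alg3 q k g r)) = 2"
proof -
  obtain p e where pe: "prime p" "e > 0" "q = p ^ e" using assms(1) by blast
  have cp: "CHAR('a) = p" using CHAR_eq_p[OF pe assms(2) assms(3)] .
  interpret ffq q e m "TYPE('a)"
    by unfold_locales (use pe cp assms(2,3) in auto)
  show ?thesis using main[of k g r] assms by simp
qed



end
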